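(* Suppose the model is a Markov model with common known initial distribution $q^{(0)}$, the data are generated under $\theta_0$, and the resulting chain is $\alpha$-mixing with $\sum_{k\ge1}\alpha_k^{\delta/(2+\delta)}<\infty$ for some $\delta>0$. Assume there are functions $M^{(1)}_k$ with $\sup_{x,y}|M^{(1)}_k(y,x)|<B$ and $f^{(1)}_k:\Theta\times\Theta\to\mathbb{R}$, $k=1,\dots,m$, such that $|\log p_{\theta_1}(y|x)-\log p_{\theta_2}(y|x)|\le\sum_{k=1}^m M^{(1)}_k(y,x)|f^{(1)}_k(\theta_2,\theta_1)|$ for all $\theta_1,\theta_2\in\Theta$ and states $x,y$; that there are $C>0$ and $\rho_n\in\mathcal{F}$ with $\int|f^{(1)}_k(\theta,\theta_0)|^{2+\delta}\rho_n(d\theta)\le C/n$ and $\int|f^{(1)}_k(\theta,\theta_0)|\rho_n(d\theta)\le C/\sqrt n$ for all $k,n$; and that $\mathcal{K}(\rho_n,\pi)\le C\sqrt n$. Then there exist $\epsilon_n=O\big(\max(n^{-1/2},n^{\delta/2}/n)\big)$ such that conditions (C1)–(C3) hold for $\rho_n$ and $\epsilon_n$.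
   Context: Markov model with known initial distribution: for each $\theta\in\Theta\subseteq\mathbb{R}^d$, $p_\theta(y|x)$ is a transition density (w.r.t. Lebesgue or counting measure), and $P^{(n)}_\theta$ is the law of $(X_0,\dots,X_n)$ with density $q^{(0)}(x_0)\prod_{i=1}^n p_\theta(x_i|x_{i-1})$, with the same initial density $q^{(0)}$ for all $\theta$. $\mathrm{E},\mathrm{Var}$ are under $P^{(n)}_{\theta_0}$. $r_n(\theta,\theta_0):=\log(p^{(n)}_{\theta_0}(X^n)/p^{(n)}_\theta(X^n))$; $\mathcal{K}$ is KL divergence; $\pi$ is a prior and $\mathcal{F}$ a family of distributions on $\Theta$. Conditions: (C1) $\int\mathcal{K}(P^{(n)}_{\theta_0},P^{(n)}_\theta)\rho_n(d\theta)\le n\epsilon_n$; (C2) $\int\mathrm{Var}(r_n(\theta,\theta_0))\rho_n(d\theta)\le n\epsilon_n$; (C3) $\mathcal{K}(\rho_n,\pi)\le n\epsilon_n$. $\alpha$-mixing coefficients: $\alpha_k:=\sup_{t\ge0}\sup\{|P(A\cap B)-P(A)P(B)|:A\in\sigma(X_0,\dots,X_t),B\in\sigma(X_s:s\ge t+k)\}$ under $\theta_0$. $\epsilon_n=O(a_n)$ means $\epsilon_n\le Ka_n$ for some constant $K$ and all $n$. *)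

theory Defs
  imports "HOL-Probability.Probability"
begin

definition KL_div :: "'a measure \<Rightarrow> 'a measure \<Rightarrow> ennreal" where
  "KL_div M N =
     (if sets M = sets N \<and> absolutely_continuous N M
         \<and> integrable M (\<lambda>x. ln (enn2real (RN_deriv N M x)))
      then ennreal (\<integral>x. ln (enn2real (RN_deriv N M x)) \<partial>M)
      else \<infinity>)"

definition Var_nn :: "'a measure \<Rightarrow> ('a \<Rightarrow> real) \<Rightarrow> ennreal" where
  "Var_nn M X = (\<integral>\<^sup>+x. ennreal ((X x - (\<integral>y. X y \<partial>M))\<^sup>2) \<partial>M)"

text \<open>Transition density p theta x y = p_theta(y|x) w.r.t. the reference measure mu.\<close>
definition transition_density :: "'a measure \<Rightarrow> ('p \<Rightarrow> 'a \<Rightarrow> 'a \<Rightarrow> real) \<Rightarrow> 'p set \<Rightarrow> bool" where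
  "transition_density \<mu> p \<Theta> \<longleftrightarrow>
     (\<forall>\<theta>\<in>\<Theta>. (\<lambda>(x, y). p \<theta> x y) \<in> borel_measurable (\<mu> \<Otimes>\<^sub>M \<mu>)
        \<and> (\<forall>x\<in>space \<mu>. \<forall>y\<in>space \<mu>. p \<theta> x y \<ge> 0)
        \<and> (\<forall>x\<in>space \<mu>. (\<integral>\<^sup>+y. ennreal (p \<theta> x y) \<partial>\<mu>) = 1))"

definition init_density :: "'a measure \<Rightarrow> ('a \<Rightarrow> real) \<Rightarrow> bool" where
  "init_density \<mu> q0 \<longleftrightarrow> q0 \<in> borel_measurable \<mu> \<and> (\<forall>x\<in>space \<mu>. q0 x \<ge> 0)
     \<and> (\<integral>\<^sup>+x. ennreal (q0 x) \<partial>\<mu>) = 1"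

definition markov_dens :: "('a \<Rightarrow> real) \<Rightarrow> ('p \<Rightarrow> 'a \<Rightarrow> 'a \<Rightarrow> real) \<Rightarrow> 'p \<Rightarrow> nat \<Rightarrow> (nat \<Rightarrow> 'a) \<Rightarrow> real" where
  "markov_dens q0 p \<theta> n x = q0 (x 0) * (\<Prod>i\<in>{1..n}. p \<theta> (x (i - 1)) (x i))"

definition markov_law :: "'a measure \<Rightarrow> ('a \<Rightarrow> real) \<Rightarrow> ('p \<Rightarrow> 'a \<Rightarrow> 'a \<Rightarrow> real) \<Rightarrow> 'p \<Rightarrow> nat
    \<Rightarrow> (nat \<Rightarrow> 'a) measure" where
  "markov_law \<mu> q0 p \<theta> n = density (PiM {0..n} (\<lambda>_. \<mu>)) (\<lambda>x. ennreal (markov_dens q0 p \<theta> n x))"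

definition log_ratio :: "('a \<Rightarrow> real) \<Rightarrow> ('p \<Rightarrow> 'a \<Rightarrow> 'a \<Rightarrow> real) \<Rightarrow> nat \<Rightarrow> 'p \<Rightarrow> 'p \<Rightarrow> (nat \<Rightarrow> 'a) \<Rightarrow> real" where
  "log_ratio q0 p n \<theta> \<theta>0 x = ln (markov_dens q0 p \<theta>0 n x / markov_dens q0 p \<theta> n x)"

definition gen_events :: "'w measure \<Rightarrow> 'a measure \<Rightarrow> (nat \<Rightarrow> 'w \<Rightarrow> 'a) \<Rightarrow> nat set \<Rightarrow> 'w set set" where
  "gen_events \<Omega> \<mu> X I = sigma_sets (space \<Omega>) (\<Union>i\<in>I. {X i -` A \<inter> space \<Omega> | A. A \<in> sets \<mu>})"

definition alpha_mix :: "'w measure \<Rightarrow> 'a measure \<Rightarrow> (nat \<Rightarrow> 'w \<Rightarrow> 'a) \<Rightarrow> nat \<Rightarrow> real" where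
  "alpha_mix \<Omega> \<mu> X k =
     (SUP t. SUP A\<in>gen_events \<Omega> \<mu> X {0..t}. SUP B\<in>gen_events \<Omega> \<mu> X {t + k..}.
        \<bar>measure \<Omega> (A \<inter> B) - measure \<Omega> A * measure \<Omega> B\<bar>)"

end

theory Submission
  imports Defs
begin



lemma abs_int_bound:
  fixes f g :: "'a \<Rightarrow> real"
  assumes "integrable M f" "integrable M g" "\<And>x. x \<in> space M \<Longrightarrow> \<bar>f x\<bar> \<le> g x"
  shows "\<bar>\<integral>x. f x \<partial>M\<bar> \<le> (\<integral>x. g x \<partial>M)"
proof -
  have "\<bar>\<integral>x. f x \<partial>M\<bar> \<le> (\<integral>x. \<bar>f x\<bar> \<partial>M)"
    using integral_norm_bound[of M f] by simp
  also have "\<dots> \<le> (\<integral>x. g x \<partial>M)"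
    using assms by (intro integral_mono) auto
  finally show ?thesis .
qed

lemma cov_step:
  fixes W Z :: "'a \<Rightarrow> real"
  assumes P: "prob_space M" and sub: "subalgebra M F"
    and Wm: "W \<in> borel_measurable F" and Wb: "\<forall>x\<in>space M. \<bar>W x\<bar> \<le> w"
    and Zm: "Z \<in> borel_measurable M" and Zb: "\<forall>x\<in>space M. \<bar>Z x\<bar> \<le> z"
  shows "\<exists>\<zeta>. \<zeta> \<in> borel_measurable F \<and> (\<forall>x. \<zeta> x \<in> {-1,0,1}) \<and>
     \<bar>(\<integral>x. W x * Z x \<partial>M) - (\<integral>x. W x \<partial>M) * (\<integral>x. Z x \<partial>M)\<bar>
       \<le> w * ((\<integral>x. \<zeta> x * Z x \<partial>M) - (\<integral>x. \<zeta> x \<partial>M) * (\<integral>x. Z x \<partial>M))"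
proof -
  interpret prob_space M by fact
  have "finite_measure_subalgebra M F"
    unfolding finite_measure_subalgebra_def finite_measure_subalgebra_axioms_def
    using sub finite_measure_axioms by simp
  then interpret sigma_finite_subalgebra M F
    by (rule finite_measure_subalgebra_is_sigma_finite)
  have WmM[measurable]: "W \<in> borel_measurable M" using measurable_from_subalg[OF sub Wm] .
  note Zm[measurable] Wm[measurable]
  have intW: "integrable M W"
    by (rule integrable_const_bound[where B=w]) (use Wb in auto)
  have intZ: "integrable M Z"
    by (rule integrable_const_bound[where B=z]) (use Zb in auto)
  have WZb: "\<bar>W x * Z x\<bar> \<le> w * z" if "x \<in> space M" for x
    unfolding abs_mult using Wb Zb that by (intro mult_mono) auto
  have intWZ: "integrable M (\<lambda>x. W x * Z x)"
    by (rule integrable_const_bound[where B="w*z"]) (use WZb in auto)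
  define c where "c = real_cond_exp M F Z"
  define e where "e = (\<integral>x. Z x \<partial>M)"
  define D where "D = (\<lambda>x. c x - e)"
  define \<zeta> where "\<zeta> = (\<lambda>x. sgn (D x))"
  have cF[measurable]: "c \<in> borel_measurable F" unfolding c_def by simp
  have cM[measurable]: "c \<in> borel_measurable M" unfolding c_def by simp
  have zF[measurable]: "\<zeta> \<in> borel_measurable F" unfolding \<zeta>_def D_def by measurable
  have zM[measurable]: "\<zeta> \<in> borel_measurable M" using measurable_from_subalg[OF sub zF] .
  have zv: "\<forall>x. \<zeta> x \<in> {-1,0,1}" unfolding \<zeta>_def by (auto simp: sgn_real_def)
  have zb: "\<bar>\<zeta> x\<bar> \<le> 1" for x using zv[rule_format, of x] by auto
  have intc: "integrable M c" unfolding c_def using real_cond_exp_int(1)[OF intZ] .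
  have i1: "integrable M (\<lambda>x. W x * c x)" "(\<integral>x. W x * c x \<partial>M) = (\<integral>x. W x * Z x \<partial>M)"
    unfolding c_def using real_cond_exp_intg[OF intWZ Wm Zm] by auto
  have intz: "integrable M \<zeta>"
    by (rule integrable_const_bound[where B=1]) (use zb in auto)
  have zZb: "\<bar>\<zeta> x * Z x\<bar> \<le> 1 * z" if "x \<in> space M" for x
    unfolding abs_mult using zb Zb that by (intro mult_mono) auto
  have intzZ: "integrable M (\<lambda>x. \<zeta> x * Z x)"
    by (rule integrable_const_bound[where B="1*z"]) (use zZb in auto)
  have i2: "integrable M (\<lambda>x. \<zeta> x * c x)" "(\<integral>x. \<zeta> x * c x \<partial>M) = (\<integral>x. \<zeta> x * Z x \<partial>M)"
    unfolding c_def using real_cond_exp_intg[OF intzZ zF Zm] by auto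
  have intD: "integrable M D" unfolding D_def using intc by auto
  have intWD: "integrable M (\<lambda>x. W x * D x)"
    unfolding D_def right_diff_distrib using i1(1) intW by auto
  have intzD: "integrable M (\<lambda>x. \<zeta> x * D x)"
    unfolding D_def right_diff_distrib using i2(1) intz by auto
  have e1: "(\<integral>x. W x * D x \<partial>M) = (\<integral>x. W x * Z x \<partial>M) - (\<integral>x. W x \<partial>M) * e"
    unfolding D_def right_diff_distrib using i1 intW
    by (simp add: Bochner_Integration.integral_diff)
  have e2: "(\<integral>x. \<zeta> x * D x \<partial>M) = (\<integral>x. \<zeta> x * Z x \<partial>M) - (\<integral>x. \<zeta> x \<partial>M) * e"
    unfolding D_def right_diff_distrib using i2 intz
    by (simp add: Bochner_Integration.integral_diff)
  have absD: "\<zeta> x * D x = \<bar>D x\<bar>" for x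
    unfolding \<zeta>_def by (simp add: sgn_real_def)
  have w0: "0 \<le> w"
  proof -
    obtain x where "x \<in> space M" using not_empty by blast
    then show ?thesis using Wb by force
  qed
  have "\<bar>\<integral>x. W x * D x \<partial>M\<bar> \<le> (\<integral>x. w * (\<zeta> x * D x) \<partial>M)"
  proof (rule abs_int_bound[OF intWD])
    show "integrable M (\<lambda>x. w * (\<zeta> x * D x))" using intzD by auto
    fix x assume x: "x \<in> space M"
    show "\<bar>W x * D x\<bar> \<le> w * (\<zeta> x * D x)"
      unfolding absD abs_mult using Wb x by (intro mult_right_mono) auto
  qed
  also have "\<dots> = w * (\<integral>x. \<zeta> x * D x \<partial>M)" by simp
  finally have "\<bar>\<integral>x. W x * D x \<partial>M\<bar> \<le> w * (\<integral>x. \<zeta> x * D x \<partial>M)" .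
  then show ?thesis using zF zv e1 e2 unfolding e_def by (intro exI[of _ \<zeta>]) simp
qed



lemma cov_sign:
  fixes \<xi> \<eta> :: "'a \<Rightarrow> real"
  assumes P: "prob_space M" and subA: "subalgebra M Fa" and subB: "subalgebra M Fb"
    and xm: "\<xi> \<in> borel_measurable Fa" and xv: "\<forall>x. \<xi> x \<in> {-1,0,1}"
    and em: "\<eta> \<in> borel_measurable Fb" and ev: "\<forall>x. \<eta> x \<in> {-1,0,1}"
    and mix: "\<forall>A\<in>sets Fa. \<forall>B\<in>sets Fb. \<bar>measure M (A \<inter> B) - measure M A * measure M B\<bar> \<le> a"
  shows "\<bar>(\<integral>x. \<xi> x * \<eta> x \<partial>M) - (\<integral>x. \<xi> x \<partial>M) * (\<integral>x. \<eta> x \<partial>M)\<bar> \<le> 4 * a"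
proof -
  interpret prob_space M by fact
  note xm[measurable] em[measurable]
  have sA: "space Fa = space M" and sB: "space Fb = space M" using subA subB by (auto simp: subalgebra_def)
  define A1 where "A1 = {x\<in>space M. \<xi> x = 1}"
  define A2 where "A2 = {x\<in>space M. \<xi> x = -1}"
  define B1 where "B1 = {x\<in>space M. \<eta> x = 1}"
  define B2 where "B2 = {x\<in>space M. \<eta> x = -1}"
  have A1: "A1 \<in> sets Fa" unfolding A1_def sA[symmetric] by measurable
  have A2: "A2 \<in> sets Fa" unfolding A2_def sA[symmetric] by measurable
  have B1: "B1 \<in> sets Fb" unfolding B1_def sB[symmetric] by measurable
  have B2: "B2 \<in> sets Fb" unfolding B2_def sB[symmetric] by measurable
  have A1M: "A1 \<in> events" and A2M: "A2 \<in> events" using A1 A2 subA by (auto simp: subalgebra_def)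
  have B1M: "B1 \<in> events" and B2M: "B2 \<in> events" using B1 B2 subB by (auto simp: subalgebra_def)
  have sub1: "A1 \<subseteq> space M" "A2 \<subseteq> space M" "B1 \<subseteq> space M" "B2 \<subseteq> space M"
    unfolding A1_def A2_def B1_def B2_def by auto
  have intI: "integrable M (indicator A :: 'a \<Rightarrow> real)" if "A \<in> events" for A
    using that by (intro integrable_real_indicator) (auto simp: less_top[symmetric])
  have ev4: "A1 \<inter> B1 \<in> events" "A1 \<inter> B2 \<in> events" "A2 \<inter> B1 \<in> events" "A2 \<inter> B2 \<in> events"
    using A1M A2M B1M B2M by auto
  have xi: "\<xi> x = indicator A1 x - indicator A2 x" if "x \<in> space M" for x
    using xv[rule_format, of x] that unfolding A1_def A2_def by (auto simp: indicator_def)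
  have eta: "\<eta> x = indicator B1 x - indicator B2 x" if "x \<in> space M" for x
    using ev[rule_format, of x] that unfolding B1_def B2_def by (auto simp: indicator_def)
  have prod: "\<xi> x * \<eta> x = indicator (A1 \<inter> B1) x - indicator (A1 \<inter> B2) x
       - indicator (A2 \<inter> B1) x + indicator (A2 \<inter> B2) x" if "x \<in> space M" for x
    unfolding xi[OF that] eta[OF that] by (simp add: indicator_inter_arith algebra_simps)
  have I1: "(\<integral>x. \<xi> x \<partial>M) = prob A1 - prob A2"
  proof -
    have "(\<integral>x. \<xi> x \<partial>M) = (\<integral>x. indicator A1 x - indicator A2 x \<partial>M)"
      by (intro Bochner_Integration.integral_cong) (auto simp: xi)
    also have "\<dots> = prob A1 - prob A2"
      using A1M A2M sub1 intI by (simp add: Int_absorb2)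
    finally show ?thesis .
  qed
  have I2: "(\<integral>x. \<eta> x \<partial>M) = prob B1 - prob B2"
  proof -
    have "(\<integral>x. \<eta> x \<partial>M) = (\<integral>x. indicator B1 x - indicator B2 x \<partial>M)"
      by (intro Bochner_Integration.integral_cong) (auto simp: eta)
    also have "\<dots> = prob B1 - prob B2"
      using B1M B2M sub1 intI by (simp add: Int_absorb2)
    finally show ?thesis .
  qed
  have I3: "(\<integral>x. \<xi> x * \<eta> x \<partial>M) = prob (A1 \<inter> B1) - prob (A1 \<inter> B2) - prob (A2 \<inter> B1) + prob (A2 \<inter> B2)"
  proof -
    have "(\<integral>x. \<xi> x * \<eta> x \<partial>M) = (\<integral>x. indicator (A1 \<inter> B1) x - indicator (A1 \<inter> B2) x
       - indicator (A2 \<inter> B1) x + indicator (A2 \<inter> B2) x \<partial>M)"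
      by (intro Bochner_Integration.integral_cong) (auto simp: prod)
    also have "\<dots> = prob (A1 \<inter> B1) - prob (A1 \<inter> B2) - prob (A2 \<inter> B1) + prob (A2 \<inter> B2)"
      using ev4 sub1 intI by (simp add: Int_absorb2 le_infI1)
    finally show ?thesis .
  qed
  have m11: "\<bar>prob (A1 \<inter> B1) - prob A1 * prob B1\<bar> \<le> a" using mix A1 B1 by blast
  have m12: "\<bar>prob (A1 \<inter> B2) - prob A1 * prob B2\<bar> \<le> a" using mix A1 B2 by blast
  have m21: "\<bar>prob (A2 \<inter> B1) - prob A2 * prob B1\<bar> \<le> a" using mix A2 B1 by blast
  have m22: "\<bar>prob (A2 \<inter> B2) - prob A2 * prob B2\<bar> \<le> a" using mix A2 B2 by blast
  have eq: "(\<integral>x. \<xi> x * \<eta> x \<partial>M) - (\<integral>x. \<xi> x \<partial>M) * (\<integral>x. \<eta> x \<partial>M)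
     = (prob (A1 \<inter> B1) - prob A1 * prob B1) - (prob (A1 \<inter> B2) - prob A1 * prob B2)
       - (prob (A2 \<inter> B1) - prob A2 * prob B1) + (prob (A2 \<inter> B2) - prob A2 * prob B2)"
    unfolding I1 I2 I3 by (simp add: algebra_simps)
  show ?thesis unfolding eq using m11 m12 m21 m22 by linarith
qed


lemma cov_mix:
  fixes U V :: "'a \<Rightarrow> real"
  assumes P: "prob_space M" and subA: "subalgebra M Fa" and subB: "subalgebra M Fb"
    and Um: "U \<in> borel_measurable Fa" and Ub: "\<forall>x\<in>space M. \<bar>U x\<bar> \<le> u"
    and Vm: "V \<in> borel_measurable Fb" and Vb: "\<forall>x\<in>space M. \<bar>V x\<bar> \<le> v"
    and mix: "\<forall>A\<in>sets Fa. \<forall>B\<in>sets Fb. \<bar>measure M (A \<inter> B) - measure M A * measure M B\<bar> \<le> a"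
  shows "\<bar>(\<integral>x. U x * V x \<partial>M) - (\<integral>x. U x \<partial>M) * (\<integral>x. V x \<partial>M)\<bar> \<le> 4 * u * v * a"
proof -
  interpret prob_space M by fact
  have VmM: "V \<in> borel_measurable M" using measurable_from_subalg[OF subB Vm] .
  obtain \<xi> where xF: "\<xi> \<in> borel_measurable Fa" and xv: "\<forall>x. \<xi> x \<in> {-1,0,1}"
    and h1: "\<bar>(\<integral>x. U x * V x \<partial>M) - (\<integral>x. U x \<partial>M) * (\<integral>x. V x \<partial>M)\<bar>
       \<le> u * ((\<integral>x. \<xi> x * V x \<partial>M) - (\<integral>x. \<xi> x \<partial>M) * (\<integral>x. V x \<partial>M))"
    using cov_step[OF P subA Um Ub VmM Vb] by blast
  have xM: "\<xi> \<in> borel_measurable M" using measurable_from_subalg[OF subA xF] .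
  have xb: "\<forall>x\<in>space M. \<bar>\<xi> x\<bar> \<le> 1" proof
    fix x assume "x \<in> space M" show "\<bar>\<xi> x\<bar> \<le> 1" using xv[rule_format, of x] by auto
  qed
  obtain \<eta> where eF: "\<eta> \<in> borel_measurable Fb" and ev: "\<forall>x. \<eta> x \<in> {-1,0,1}"
    and h2: "\<bar>(\<integral>x. V x * \<xi> x \<partial>M) - (\<integral>x. V x \<partial>M) * (\<integral>x. \<xi> x \<partial>M)\<bar>
       \<le> v * ((\<integral>x. \<eta> x * \<xi> x \<partial>M) - (\<integral>x. \<eta> x \<partial>M) * (\<integral>x. \<xi> x \<partial>M))"
    using cov_step[OF P subB Vm Vb xM xb] by blast
  have mix': "\<forall>A\<in>sets Fb. \<forall>B\<in>sets Fa. \<bar>measure M (A \<inter> B) - measure M A * measure M B\<bar> \<le> a"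
    using mix by (metis Int_commute mult.commute)
  have h3: "\<bar>(\<integral>x. \<eta> x * \<xi> x \<partial>M) - (\<integral>x. \<eta> x \<partial>M) * (\<integral>x. \<xi> x \<partial>M)\<bar> \<le> 4 * a"
    using cov_sign[OF P subB subA eF ev xF xv mix'] .
  obtain x0 where x0: "x0 \<in> space M" using not_empty by blast
  have u0: "0 \<le> u" using Ub x0 by force
  have v0: "0 \<le> v" using Vb x0 by force
  have c: "(\<integral>x. \<xi> x * V x \<partial>M) - (\<integral>x. \<xi> x \<partial>M) * (\<integral>x. V x \<partial>M)
      = (\<integral>x. V x * \<xi> x \<partial>M) - (\<integral>x. V x \<partial>M) * (\<integral>x. \<xi> x \<partial>M)"
    by (simp add: mult.commute)
  have "(\<integral>x. \<xi> x * V x \<partial>M) - (\<integral>x. \<xi> x \<partial>M) * (\<integral>x. V x \<partial>M) \<le> v * (4 * a)"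
    unfolding c using h2 h3 v0 by (smt (verit, best) mult_left_mono)
  then have "u * ((\<integral>x. \<xi> x * V x \<partial>M) - (\<integral>x. \<xi> x \<partial>M) * (\<integral>x. V x \<partial>M)) \<le> u * (v * (4 * a))"
    using u0 by (rule mult_left_mono)
  then show ?thesis using h1 by (simp add: algebra_simps)
qed



definition genM :: "'w measure \<Rightarrow> 'a measure \<Rightarrow> (nat \<Rightarrow> 'w \<Rightarrow> 'a) \<Rightarrow> nat set \<Rightarrow> 'w measure" where
  "genM \<Omega> \<mu> X I = sigma (space \<Omega>) (\<Union>i\<in>I. {X i -` A \<inter> space \<Omega> | A. A \<in> sets \<mu>})"

lemma genM_props:
  assumes Xm: "\<forall>i. X i \<in> measurable \<Omega> \<mu>"
  shows "sets (genM \<Omega> \<mu> X I) = gen_events \<Omega> \<mu> X I"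
    and "space (genM \<Omega> \<mu> X I) = space \<Omega>"
    and "gen_events \<Omega> \<mu> X I \<subseteq> sets \<Omega>"
    and "subalgebra \<Omega> (genM \<Omega> \<mu> X I)"
proof -
  let ?G = "\<Union>i\<in>I. {X i -` A \<inter> space \<Omega> | A. A \<in> sets \<mu>}"
  have G: "?G \<subseteq> Pow (space \<Omega>)" by auto
  show s: "sets (genM \<Omega> \<mu> X I) = gen_events \<Omega> \<mu> X I"
    unfolding genM_def gen_events_def using G by (rule sets_measure_of)
  show sp: "space (genM \<Omega> \<mu> X I) = space \<Omega>"
    unfolding genM_def using G by (rule space_measure_of)
  have GM: "?G \<subseteq> sets \<Omega>"
  proof (rule UN_least)
    fix i show "{X i -` A \<inter> space \<Omega> | A. A \<in> sets \<mu>} \<subseteq> sets \<Omega>"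
      using measurable_sets[OF Xm[rule_format, of i]] by blast
  qed
  show sub: "gen_events \<Omega> \<mu> X I \<subseteq> sets \<Omega>"
    unfolding gen_events_def using GM by (rule sets.sigma_sets_subset)
  show "subalgebra \<Omega> (genM \<Omega> \<mu> X I)" unfolding subalgebra_def using s sp sub by auto
qed

lemma genM_meas:
  assumes Xm: "\<forall>i. X i \<in> measurable \<Omega> \<mu>" and i: "i \<in> I"
  shows "X i \<in> measurable (genM \<Omega> \<mu> X I) \<mu>"
proof (rule measurableI)
  fix x assume "x \<in> space (genM \<Omega> \<mu> X I)"
  then have "x \<in> space \<Omega>" using genM_props(2)[OF Xm] by simp
  then show "X i x \<in> space \<mu>" by (rule measurable_space[OF Xm[rule_format, of i]])
next
  fix A assume A: "A \<in> sets \<mu>"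
  have "X i -` A \<inter> space \<Omega> \<in> {X i -` A \<inter> space \<Omega> | A. A \<in> sets \<mu>}" using A by blast
  then have "X i -` A \<inter> space \<Omega> \<in> (\<Union>i\<in>I. {X i -` A \<inter> space \<Omega> | A. A \<in> sets \<mu>})"
    using i by blast
  then have "X i -` A \<inter> space \<Omega> \<in> gen_events \<Omega> \<mu> X I"
    unfolding gen_events_def by (rule sigma_sets.Basic)
  then show "X i -` A \<inter> space (genM \<Omega> \<mu> X I) \<in> sets (genM \<Omega> \<mu> X I)"
    using genM_props(1,2)[OF Xm] by simp
qed
lemma alpha_props:
  assumes PO: "prob_space \<Omega>" and Xm: "\<forall>i. X i \<in> measurable \<Omega> \<mu>"
  shows "A \<in> gen_events \<Omega> \<mu> X {0..t} \<Longrightarrow> B \<in> gen_events \<Omega> \<mu> X {t+k..} \<Longrightarrow>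
      \<bar>measure \<Omega> (A \<inter> B) - measure \<Omega> A * measure \<Omega> B\<bar> \<le> alpha_mix \<Omega> \<mu> X k"
    and "0 \<le> alpha_mix \<Omega> \<mu> X k" and "alpha_mix \<Omega> \<mu> X k \<le> 1"
proof -
  interpret prob_space \<Omega> by fact
  define h where "h = (\<lambda>A B. \<bar>measure \<Omega> (A \<inter> B) - measure \<Omega> A * measure \<Omega> B\<bar>)"
  have hb: "h A B \<le> 1" for A B
  proof -
    have f: "0 \<le> prob (A \<inter> B)" "prob (A \<inter> B) \<le> 1" "0 \<le> prob A" "prob A \<le> 1" "0 \<le> prob B" "prob B \<le> 1"
      by auto
    have g: "0 \<le> prob A * prob B" "prob A * prob B \<le> 1"
      using f by (auto intro: mult_le_one)
    show ?thesis unfolding h_def abs_le_iff using f g by linarith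
  qed
  have h0: "0 \<le> h A B" for A B unfolding h_def by simp
  have ne: "{} \<in> gen_events \<Omega> \<mu> X I" for I unfolding gen_events_def by (rule sigma_sets.Empty)
  define I where "I = (\<lambda>t A. SUP B\<in>gen_events \<Omega> \<mu> X {t + k..}. h A B)"
  define Mi where "Mi = (\<lambda>t. SUP A\<in>gen_events \<Omega> \<mu> X {0..t}. I t A)"
  have a: "alpha_mix \<Omega> \<mu> X k = (SUP t. Mi t)"
    unfolding alpha_mix_def Mi_def I_def h_def by (rule refl)
  have I1: "I t A \<le> 1" for t A unfolding I_def by (rule cSUP_least) (use ne hb in blast)+
  have Ih: "B \<in> gen_events \<Omega> \<mu> X {t+k..} \<Longrightarrow> h A B \<le> I t A" for t A B
    unfolding I_def by (rule cSUP_upper, assumption, rule bdd_aboveI2[where M=1], rule hb)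
  have M1: "Mi t \<le> 1" for t unfolding Mi_def by (rule cSUP_least) (use ne I1 in blast)+
  have MI: "A \<in> gen_events \<Omega> \<mu> X {0..t} \<Longrightarrow> I t A \<le> Mi t" for t A
    unfolding Mi_def by (rule cSUP_upper, assumption, rule bdd_aboveI2[where M=1], rule I1)
  have aM: "Mi t \<le> alpha_mix \<Omega> \<mu> X k" for t
    unfolding a by (rule cSUP_upper, simp, rule bdd_aboveI2[where M=1], rule M1)
  show "\<bar>measure \<Omega> (A \<inter> B) - measure \<Omega> A * measure \<Omega> B\<bar> \<le> alpha_mix \<Omega> \<mu> X k"
    if A: "A \<in> gen_events \<Omega> \<mu> X {0..t}" and B: "B \<in> gen_events \<Omega> \<mu> X {t+k..}"
  proof -
    have 1: "h A B \<le> I t A" using Ih B by blast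
    have 2: "I t A \<le> Mi t" using MI A by blast
    show ?thesis using 1 2 aM[of t] unfolding h_def by linarith
  qed
  show "0 \<le> alpha_mix \<Omega> \<mu> X k"
  proof -
    have 1: "h {} {} \<le> I 0 {}" using Ih ne by blast
    have 2: "I 0 {} \<le> Mi 0" using MI ne by blast
    show ?thesis using 1 2 aM[of 0] h0[of "{}" "{}"] by linarith
  qed
  show "alpha_mix \<Omega> \<mu> X k \<le> 1" unfolding a by (rule cSUP_least) (use M1 in blast)+
qed




lemma cov_eq:
  fixes U V :: "'a \<Rightarrow> real"
  assumes P: "prob_space M" and U: "integrable M U" and V: "integrable M V"
    and UV: "integrable M (\<lambda>x. U x * V x)"
  shows "(\<integral>x. (U x - (\<integral>y. U y \<partial>M)) * (V x - (\<integral>y. V y \<partial>M)) \<partial>M)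
       = (\<integral>x. U x * V x \<partial>M) - (\<integral>x. U x \<partial>M) * (\<integral>x. V x \<partial>M)"
proof -
  interpret prob_space M by fact
  define a where "a = (\<integral>y. U y \<partial>M)"
  define c where "c = (\<integral>y. V y \<partial>M)"
  have e: "\<And>x. (U x - a) * (V x - c) = (U x * V x - c * U x) - (a * V x - a * c)"
    by algebra
  have "(\<integral>x. (U x - a) * (V x - c) \<partial>M) = (\<integral>x. (U x * V x - c * U x) - (a * V x - a * c) \<partial>M)"
    by (simp only: e)
  also have "\<dots> = (\<integral>x. U x * V x - c * U x \<partial>M) - (\<integral>x. a * V x - a * c \<partial>M)"
    using U V UV by (intro Bochner_Integration.integral_diff[of M "\<lambda>x. U x * V x - c * U x" "\<lambda>x. a * V x - a * c"]) auto
  also have "\<dots> = ((\<integral>x. U x * V x \<partial>M) - c * a) - (a * c - a * c)"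
    using U V UV by (simp add: Bochner_Integration.integral_diff a_def c_def prob_space)
  finally show ?thesis by (simp add: a_def c_def)
qed



lemma double_sum_bound:
  fixes c :: "nat \<Rightarrow> nat \<Rightarrow> real" and \<beta> :: "nat \<Rightarrow> real"
  assumes sym: "\<And>i j. c i j = c j i" and bd: "\<And>i j. i \<le> j \<Longrightarrow> \<bar>c i j\<bar> \<le> \<beta> (j - i)"
    and b0: "\<And>d. 0 \<le> \<beta> d" and sm: "summable \<beta>"
  shows "(\<Sum>i=1..n. \<Sum>j=1..n. c i j) \<le> real n * (2 * suminf \<beta>)"
proof (induction n)
  case 0
  then show ?case by simp
next
  case (Suc n)
  have split: "(\<Sum>i=1..Suc n. \<Sum>j=1..Suc n. c i j)
      = (\<Sum>i=1..n. \<Sum>j=1..n. c i j) + 2 * (\<Sum>i=1..n. c i (Suc n)) + c (Suc n) (Suc n)"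
  proof -
    have "(\<Sum>i=1..Suc n. \<Sum>j=1..Suc n. c i j) = (\<Sum>i=1..Suc n. (\<Sum>j=1..n. c i j) + c i (Suc n))"
      by simp
    also have "\<dots> = (\<Sum>i=1..n. (\<Sum>j=1..n. c i j) + c i (Suc n)) + ((\<Sum>j=1..n. c (Suc n) j) + c (Suc n) (Suc n))"
      by simp
    also have "(\<Sum>j=1..n. c (Suc n) j) = (\<Sum>i=1..n. c i (Suc n))" by (intro sum.cong refl) (rule sym)
    finally show ?thesis by (simp add: sum.distrib)
  qed
  have r: "(\<Sum>i=1..n. c i (Suc n)) \<le> (\<Sum>d=1..n. \<beta> d)"
  proof -
    have "(\<Sum>i=1..n. c i (Suc n)) \<le> (\<Sum>i=1..n. \<beta> (Suc n - i))"
    proof (rule sum_mono)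
      fix i assume "i \<in> {1..n}"
      then have "i \<le> Suc n" by simp
      from bd[OF this] show "c i (Suc n) \<le> \<beta> (Suc n - i)" using abs_ge_self[of "c i (Suc n)"] by linarith
    qed
    also have "\<dots> = (\<Sum>d=1..n. \<beta> d)"
      by (subst sum.atLeastAtMost_rev) simp
    finally show ?thesis .
  qed
  have d: "c (Suc n) (Suc n) \<le> \<beta> 0" using bd[of "Suc n" "Suc n"] by simp
  have s: "\<beta> 0 + (\<Sum>d=1..n. \<beta> d) \<le> suminf \<beta>"
  proof -
    have "\<beta> 0 + (\<Sum>d=1..n. \<beta> d) = (\<Sum>d=0..n. \<beta> d)"
      by (simp add: sum.atLeast_Suc_atMost)
    also have "\<dots> \<le> suminf \<beta>" using sm b0 by (intro sum_le_suminf) auto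
    finally show ?thesis .
  qed
  have "0 \<le> (\<Sum>d=1..n. \<beta> d)" using b0 by (simp add: sum_nonneg)
  then show ?case unfolding split using Suc.IH r d s b0[of 0] by (simp add: algebra_simps)
qed

lemma var_sum_bound:
  fixes G :: "nat \<Rightarrow> 'w \<Rightarrow> real" and \<alpha> :: "nat \<Rightarrow> real"
  assumes P: "prob_space M"
    and Gm: "\<And>i. G i \<in> borel_measurable M"
    and Gb: "\<And>i \<omega>. \<omega> \<in> space M \<Longrightarrow> \<bar>G i \<omega>\<bar> \<le> b"
    and cov: "\<And>i j. i + 2 \<le> j \<Longrightarrow>
       \<bar>(\<integral>\<omega>. G i \<omega> * G j \<omega> \<partial>M) - (\<integral>\<omega>. G i \<omega> \<partial>M) * (\<integral>\<omega>. G j \<omega> \<partial>M)\<bar> \<le> 4 * b\<^sup>2 * \<alpha> (j - i - 1)"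
    and a0: "\<And>k. 0 \<le> \<alpha> k" and sm: "summable (\<lambda>k. \<alpha> (Suc k))"
  shows "(\<integral>\<omega>. ((\<Sum>i=1..n. G i \<omega>) - (\<integral>\<omega>. (\<Sum>i=1..n. G i \<omega>) \<partial>M))\<^sup>2 \<partial>M)
     \<le> real n * (8 * b\<^sup>2 * suminf (\<lambda>d. if d < 2 then 1 else \<alpha> (d - 1)))"
proof -
  interpret prob_space M by fact
  define \<gamma> where "\<gamma> = (\<lambda>d::nat. if d < 2 then 1 else \<alpha> (d - 1))"
  obtain x0 where x0: "x0 \<in> space M" using not_empty by blast
  have b0: "0 \<le> b" using Gb[OF x0, of 0] by linarith
  have intG: "integrable M (G i)" for i
    by (rule integrable_const_bound[where B=b]) (use Gb Gm in auto)
  define e where "e = (\<lambda>i. \<integral>\<omega>. G i \<omega> \<partial>M)"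
  define Z where "Z = (\<lambda>i \<omega>. G i \<omega> - e i)"
  have eb: "\<bar>e i\<bar> \<le> b" for i
  proof -
    have "\<bar>e i\<bar> \<le> (\<integral>\<omega>. b \<partial>M)" unfolding e_def
      by (rule abs_int_bound) (use intG Gb in auto)
    then show ?thesis by (simp add: prob_space)
  qed
  have Zm: "Z i \<in> borel_measurable M" for i unfolding Z_def using Gm[of i] by simp
  have Zb: "\<bar>Z i \<omega>\<bar> \<le> 2 * b" if "\<omega> \<in> space M" for i \<omega>
    unfolding Z_def using Gb[OF that, of i] eb[of i] by linarith
  have ZZb: "\<bar>Z i \<omega> * Z j \<omega>\<bar> \<le> 4 * b\<^sup>2" if "\<omega> \<in> space M" for i j \<omega>
  proof -
    have "\<bar>Z i \<omega> * Z j \<omega>\<bar> \<le> (2 * b) * (2 * b)" unfolding abs_mult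
      using Zb[OF that, of i] Zb[OF that, of j] by (intro mult_mono) auto
    then show ?thesis by (simp add: power2_eq_square)
  qed
  have intZZ: "integrable M (\<lambda>\<omega>. Z i \<omega> * Z j \<omega>)" for i j
    by (rule integrable_const_bound[where B="4 * b\<^sup>2"]) (use ZZb Zm in auto)
  have intGG: "integrable M (\<lambda>\<omega>. G i \<omega> * G j \<omega>)" for i j
  proof (rule integrable_const_bound[where B="b * b"])
    show "AE x in M. norm (G i x * G j x) \<le> b * b"
      using Gb b0 by (intro AE_I2) (simp add: abs_mult mult_mono)
  qed (use Gm in simp)
  define c where "c = (\<lambda>i j. \<integral>\<omega>. Z i \<omega> * Z j \<omega> \<partial>M)"
  have csym: "c i j = c j i" for i j unfolding c_def by (simp add: mult.commute)
  have cbd: "\<bar>c i j\<bar> \<le> 4 * b\<^sup>2 * \<gamma> (j - i)" if "i \<le> j" for i j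
  proof (cases "i + 2 \<le> j")
    case True
    have "c i j = (\<integral>\<omega>. G i \<omega> * G j \<omega> \<partial>M) - (\<integral>\<omega>. G i \<omega> \<partial>M) * (\<integral>\<omega>. G j \<omega> \<partial>M)"
      unfolding c_def Z_def e_def by (rule cov_eq[OF P intG intG intGG])
    moreover have "\<gamma> (j - i) = \<alpha> (j - i - 1)" unfolding \<gamma>_def using True by simp
    ultimately show ?thesis using cov[OF True] by simp
  next
    case False
    have "\<bar>c i j\<bar> \<le> (\<integral>\<omega>. 4 * b\<^sup>2 \<partial>M)" unfolding c_def
      by (rule abs_int_bound) (use intZZ ZZb in auto)
    moreover have "\<gamma> (j - i) = 1" unfolding \<gamma>_def using False by simp
    ultimately show ?thesis by (simp add: prob_space)
  qed
  have g0: "0 \<le> \<gamma> d" for d unfolding \<gamma>_def using a0 by simp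
  have gsm: "summable \<gamma>"
  proof -
    have "summable (\<lambda>d. \<gamma> (d + 2))" unfolding \<gamma>_def using sm by simp
    then show ?thesis by (rule summable_iff_shift[THEN iffD1])
  qed
  have bsm: "summable (\<lambda>d. 4 * b\<^sup>2 * \<gamma> d)" using gsm by (rule summable_mult)
  have key: "(\<Sum>i=1..n. \<Sum>j=1..n. c i j) \<le> real n * (2 * suminf (\<lambda>d. 4 * b\<^sup>2 * \<gamma> d))"
    by (rule double_sum_bound[OF csym cbd _ bsm]) (use g0 in simp)+
  have sumint: "(\<integral>\<omega>. (\<Sum>i=1..n. G i \<omega>) \<partial>M) = (\<Sum>i=1..n. e i)"
    unfolding e_def by (rule Bochner_Integration.integral_sum) (rule intG)
  have pw: "((\<Sum>i=1..n. G i \<omega>) - (\<Sum>i=1..n. e i))\<^sup>2 = (\<Sum>i=1..n. \<Sum>j=1..n. Z i \<omega> * Z j \<omega>)" for \<omega>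
  proof -
    have "(\<Sum>i=1..n. G i \<omega>) - (\<Sum>i=1..n. e i) = (\<Sum>i=1..n. Z i \<omega>)"
      unfolding Z_def by (simp add: sum_subtractf)
    then show ?thesis by (simp add: power2_eq_square sum_product)
  qed
  have "(\<integral>\<omega>. ((\<Sum>i=1..n. G i \<omega>) - (\<integral>\<omega>. (\<Sum>i=1..n. G i \<omega>) \<partial>M))\<^sup>2 \<partial>M)
      = (\<integral>\<omega>. (\<Sum>i=1..n. \<Sum>j=1..n. Z i \<omega> * Z j \<omega>) \<partial>M)"
    unfolding sumint pw by simp
  also have "\<dots> = (\<Sum>i=1..n. \<Sum>j=1..n. c i j)"
    unfolding c_def using intZZ by (simp add: Bochner_Integration.integral_sum)
  also have "\<dots> \<le> real n * (2 * suminf (\<lambda>d. 4 * b\<^sup>2 * \<gamma> d))" by (rule key)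
  also have "suminf (\<lambda>d. 4 * b\<^sup>2 * \<gamma> d) = 4 * b\<^sup>2 * suminf \<gamma>"
    using gsm by (rule suminf_mult)
  finally show ?thesis unfolding \<gamma>_def by (simp add: algebra_simps)
qed



lemma space_PiM_mem:
  fixes n :: nat
  assumes "x \<in> space (PiM {0..n} (\<lambda>_. \<mu>))" "i \<le> n"
  shows "x i \<in> space \<mu>"
proof -
  have "\<forall>j\<in>{0..n}. x j \<in> space \<mu>" using assms(1) unfolding space_PiM PiE_iff by blast
  then show ?thesis using assms(2) by (meson atLeastAtMost_iff le0)
qed

lemma dens_props:
  assumes td: "transition_density \<mu> p \<Theta>"
    and pos: "\<forall>\<theta>\<in>\<Theta>. \<forall>x\<in>space \<mu>. \<forall>y\<in>space \<mu>. p \<theta> x y > 0"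
    and q0: "init_density \<mu> q0" and th: "\<theta> \<in> \<Theta>"
    and x: "x \<in> space (PiM {0..n} (\<lambda>_. \<mu>))"
  shows "0 \<le> markov_dens q0 p \<theta> n x"
    and "0 < markov_dens q0 p \<theta> n x \<longleftrightarrow> 0 < q0 (x 0)"
    and "0 < (\<Prod>i\<in>{1..n}. p \<theta> (x (i - 1)) (x i))"
proof -
  have xi: "x i \<in> space \<mu>" if "i \<le> n" for i using space_PiM_mem[OF x that] .
  show pp: "0 < (\<Prod>i\<in>{1..n}. p \<theta> (x (i - 1)) (x i))"
    by (rule prod_pos) (use pos th xi in auto)
  have q: "0 \<le> q0 (x 0)" using q0 xi[of 0] unfolding init_density_def by auto
  show "0 \<le> markov_dens q0 p \<theta> n x" unfolding markov_dens_def using pp q by simp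
  show "0 < markov_dens q0 p \<theta> n x \<longleftrightarrow> 0 < q0 (x 0)"
    unfolding markov_dens_def using pp q by (simp add: zero_less_mult_iff)
qed

lemma dens_meas:
  assumes td: "transition_density \<mu> p \<Theta>" and q0: "init_density \<mu> q0" and th: "\<theta> \<in> \<Theta>"
  shows "markov_dens q0 p \<theta> n \<in> borel_measurable (PiM {0..n} (\<lambda>_. \<mu>))"
proof -
  let ?L = "PiM {0..n} (\<lambda>_. \<mu>)"
  have q0m: "q0 \<in> borel_measurable \<mu>" using q0 unfolding init_density_def by simp
  have pm: "(\<lambda>(x, y). p \<theta> x y) \<in> borel_measurable (\<mu> \<Otimes>\<^sub>M \<mu>)" using td th unfolding transition_density_def by simp
  have pi: "(\<lambda>x. p \<theta> (x (i - 1)) (x i)) \<in> borel_measurable ?L" if "i \<in> {1..n}" for i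
  proof -
    have "(\<lambda>x. (x (i - 1), x i)) \<in> measurable ?L (\<mu> \<Otimes>\<^sub>M \<mu>)"
      using that by (intro measurable_Pair measurable_component_singleton) auto
    from measurable_comp[OF this pm] show ?thesis by (simp add: comp_def)
  qed
  have q0c: "(\<lambda>x. q0 (x 0)) \<in> borel_measurable ?L"
    using measurable_comp[OF measurable_component_singleton[of 0 "{0..n}" "\<lambda>_. \<mu>"] q0m]
    by (simp add: comp_def)
  have "(\<lambda>x. \<Prod>i\<in>{1..n}. p \<theta> (x (i - 1)) (x i)) \<in> borel_measurable ?L"
    by (rule borel_measurable_prod) (rule pi)
  then show ?thesis unfolding markov_dens_def using q0c by (intro borel_measurable_times)
qed

lemma lr_formula:
  assumes td: "transition_density \<mu> p \<Theta>"
    and pos: "\<forall>\<theta>\<in>\<Theta>. \<forall>x\<in>space \<mu>. \<forall>y\<in>space \<mu>. p \<theta> x y > 0"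
    and q0: "init_density \<mu> q0" and th: "\<theta> \<in> \<Theta>" and th0: "\<theta>0 \<in> \<Theta>"
    and x: "x \<in> space (PiM {0..n} (\<lambda>_. \<mu>))" and qx: "0 < q0 (x 0)"
  shows "log_ratio q0 p n \<theta> \<theta>0 x = (\<Sum>i=1..n. ln (p \<theta>0 (x (i - 1)) (x i)) - ln (p \<theta> (x (i - 1)) (x i)))"
proof -
  have xi: "x i \<in> space \<mu>" if "i \<le> n" for i using space_PiM_mem[OF x that] .
  have p1: "0 < (\<Prod>i\<in>{1..n}. p \<theta> (x (i - 1)) (x i))" using dens_props(3)[OF td pos q0 th x] .
  have p0: "0 < (\<Prod>i\<in>{1..n}. p \<theta>0 (x (i - 1)) (x i))" using dens_props(3)[OF td pos q0 th0 x] .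
  have "log_ratio q0 p n \<theta> \<theta>0 x = ln ((\<Prod>i\<in>{1..n}. p \<theta>0 (x (i - 1)) (x i)) / (\<Prod>i\<in>{1..n}. p \<theta> (x (i - 1)) (x i)))"
    unfolding log_ratio_def markov_dens_def using qx by simp
  also have "\<dots> = ln (\<Prod>i\<in>{1..n}. p \<theta>0 (x (i - 1)) (x i)) - ln (\<Prod>i\<in>{1..n}. p \<theta> (x (i - 1)) (x i))"
    using p0 p1 by (rule ln_divide_pos)
  also have "\<dots> = (\<Sum>i=1..n. ln (p \<theta>0 (x (i - 1)) (x i))) - (\<Sum>i=1..n. ln (p \<theta> (x (i - 1)) (x i)))"
  proof -
    have a: "p t (x (i - 1)) (x i) \<noteq> 0" if "t \<in> \<Theta>" "i \<in> {1..n}" for t i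
      using pos that xi[of i] xi[of "i - 1"] by force
    have l0: "ln (\<Prod>i\<in>{1..n}. p \<theta>0 (x (i - 1)) (x i)) = (\<Sum>i=1..n. ln (p \<theta>0 (x (i - 1)) (x i)))"
      by (rule ln_prod) (simp, rule a[OF th0], assumption)
    have l1: "ln (\<Prod>i\<in>{1..n}. p \<theta> (x (i - 1)) (x i)) = (\<Sum>i=1..n. ln (p \<theta> (x (i - 1)) (x i)))"
      by (rule ln_prod) (simp, rule a[OF th], assumption)
    show ?thesis using l0 l1 by simp
  qed
  finally show ?thesis by (simp add: sum_subtractf)
qed


lemma kl_bound:
  assumes td: "transition_density \<mu> p \<Theta>"
    and pos: "\<forall>\<theta>\<in>\<Theta>. \<forall>x\<in>space \<mu>. \<forall>y\<in>space \<mu>. p \<theta> x y > 0"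
    and q0: "init_density \<mu> q0" and th: "\<theta> \<in> \<Theta>" and th0: "\<theta>0 \<in> \<Theta>"
    and P0p: "prob_space (markov_law \<mu> q0 p \<theta>0 n)"
    and lrb: "\<forall>x\<in>space (PiM {0..n} (\<lambda>_. \<mu>)). \<bar>log_ratio q0 p n \<theta> \<theta>0 x\<bar> \<le> R"
  shows "KL_div (markov_law \<mu> q0 p \<theta>0 n) (markov_law \<mu> q0 p \<theta> n) \<le> ennreal R"
proof -
  define L where "L = PiM {0..n} (\<lambda>_. \<mu>)"
  define d0 where "d0 = markov_dens q0 p \<theta>0 n"
  define d1 where "d1 = markov_dens q0 p \<theta> n"
  define P0 where "P0 = markov_law \<mu> q0 p \<theta>0 n"
  define P1 where "P1 = markov_law \<mu> q0 p \<theta> n"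
  have P0d: "P0 = density L (\<lambda>x. ennreal (d0 x))" unfolding P0_def markov_law_def L_def d0_def ..
  have P1d: "P1 = density L (\<lambda>x. ennreal (d1 x))" unfolding P1_def markov_law_def L_def d1_def ..
  have d0m[measurable]: "d0 \<in> borel_measurable L" unfolding d0_def L_def by (rule dens_meas[OF td q0 th0])
  have d1m[measurable]: "d1 \<in> borel_measurable L" unfolding d1_def L_def by (rule dens_meas[OF td q0 th])
  have sP0: "sets P0 = sets L" unfolding P0d by simp
  have sP1: "sets P1 = sets L" unfolding P1d by simp
  have spP0: "space P0 = space L" unfolding P0d by simp
  define h where "h = (\<lambda>x. ennreal (d0 x / d1 x))"
  have hm[measurable]: "h \<in> borel_measurable L" unfolding h_def by measurable
  have hm1: "h \<in> borel_measurable P1" unfolding measurable_cong_sets[OF sP1 refl] by (rule hm)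
  have d0nn: "0 \<le> d0 x" if "x \<in> space L" for x
    using dens_props(1)[OF td pos q0 th0] that unfolding d0_def L_def by blast
  have d1nn: "0 \<le> d1 x" if "x \<in> space L" for x
    using dens_props(1)[OF td pos q0 th] that unfolding d1_def L_def by blast
  have pw: "ennreal (d1 x) * h x = ennreal (d0 x)" if x: "x \<in> space L" for x
  proof (cases "0 < q0 (x 0)")
    case True
    have "0 < d1 x" using dens_props(2)[OF td pos q0 th] x True unfolding d1_def L_def by blast
    then show ?thesis unfolding h_def using d0nn[OF x]
      by (simp add: ennreal_mult[symmetric])
  next
    case False
    then have "q0 (x 0) = 0" using q0 space_PiM_mem[of x n \<mu> 0] x unfolding init_density_def L_def by force
    then have "d0 x = 0" "d1 x = 0" unfolding d0_def d1_def markov_dens_def by simp_all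
    then show ?thesis unfolding h_def by simp
  qed
  have eq: "density P1 h = P0"
  proof -
    have "density P1 h = density L (\<lambda>x. ennreal (d1 x) * h x)"
      unfolding P1d by (rule density_density_eq) measurable
    also have "\<dots> = density L (\<lambda>x. ennreal (d0 x))"
      by (rule density_cong) (use pw in \<open>auto intro!: AE_I2\<close>)
    finally show ?thesis unfolding P0d .
  qed
  have fin: "sigma_finite_measure P0" using P0p unfolding P0_def by (rule prob_space_imp_sigma_finite)
  have RN1: "AE x in P1. h x = RN_deriv P1 P0 x" by (rule RN_deriv_unique_sigma_finite[OF hm1 eq fin])
  have RN0: "AE x in P0. h x = RN_deriv P1 P0 x"
  proof -
    have "AE x in density P1 h. h x = RN_deriv P1 P0 x"
      using RN1 AE_density[OF hm1] by (auto elim: AE_mp)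
    then show ?thesis unfolding eq .
  qed
  have ac: "absolutely_continuous P1 P0" unfolding eq[symmetric] by (rule absolutely_continuousI_density[OF hm1])
  have ss: "sets P0 = sets P1" using sP0 sP1 by simp
  have lrm: "log_ratio q0 p n \<theta> \<theta>0 \<in> borel_measurable L"
    unfolding log_ratio_def[abs_def] d0_def[symmetric] d1_def[symmetric] by measurable
  have lrm0: "log_ratio q0 p n \<theta> \<theta>0 \<in> borel_measurable P0" unfolding measurable_cong_sets[OF sP0 refl] by (rule lrm)
  have RNm: "(\<lambda>x. ln (enn2real (RN_deriv P1 P0 x))) \<in> borel_measurable P0"
  proof -
    have "(\<lambda>x. ln (enn2real (RN_deriv P1 P0 x))) \<in> borel_measurable P1" by measurable
    then show ?thesis unfolding measurable_cong_sets[OF ss refl] .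
  qed
  have aeq: "AE x in P0. log_ratio q0 p n \<theta> \<theta>0 x = ln (enn2real (RN_deriv P1 P0 x))"
  proof -
    have "AE x in P0. x \<in> space L" unfolding spP0[symmetric] by (rule AE_I2)
    with RN0 show ?thesis
    proof (eventually_elim)
      case (elim x)
      have e: "RN_deriv P1 P0 x = ennreal (d0 x / d1 x)" using elim(1) unfolding h_def by simp
      have "0 \<le> d0 x / d1 x" using d0nn[OF elim(2)] d1nn[OF elim(2)] by (rule divide_nonneg_nonneg)
      then have "enn2real (RN_deriv P1 P0 x) = d0 x / d1 x" unfolding e by simp
      then show ?case unfolding log_ratio_def d0_def d1_def by simp
    qed
  qed
  interpret P0: prob_space P0 unfolding P0_def by (rule P0p)
  have intlr: "integrable P0 (log_ratio q0 p n \<theta> \<theta>0)"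
    by (rule P0.integrable_const_bound[where B=R]) (use lrb spP0 lrm0 L_def in \<open>auto intro!: AE_I2\<close>)
  have intRN: "integrable P0 (\<lambda>x. ln (enn2real (RN_deriv P1 P0 x)))"
    by (rule integrable_cong_AE_imp[OF intlr RNm aeq])
  have "KL_div P0 P1 = ennreal (\<integral>x. ln (enn2real (RN_deriv P1 P0 x)) \<partial>P0)"
    unfolding KL_div_def using ss ac intRN by simp
  also have "(\<integral>x. ln (enn2real (RN_deriv P1 P0 x)) \<partial>P0) = (\<integral>x. log_ratio q0 p n \<theta> \<theta>0 x \<partial>P0)"
    by (rule integral_cong_AE[OF RNm lrm0]) (use aeq in \<open>auto elim: AE_mp\<close>)
  also have "(\<integral>x. log_ratio q0 p n \<theta> \<theta>0 x \<partial>P0) \<le> (\<integral>x. R \<partial>P0)"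
    by (rule integral_mono[OF intlr]) (use lrb spP0 L_def in auto)
  also have "(\<integral>x. R \<partial>P0) = R" by (simp add: P0.prob_space)
  finally show ?thesis unfolding P0_def P1_def by (simp add: ennreal_leI)
qed



lemma alpha_summable:
  assumes PO: "prob_space \<Omega>" and Xm: "\<forall>i. X i \<in> measurable \<Omega> \<mu>" and dpos: "\<delta> > 0"
    and mix: "summable (\<lambda>k. alpha_mix \<Omega> \<mu> X (Suc k) powr (\<delta> / (2 + \<delta>)))"
  shows "summable (\<lambda>k. alpha_mix \<Omega> \<mu> X (Suc k))"
proof (rule summable_comparison_test'[OF mix])
  fix k :: nat
  let ?a = "alpha_mix \<Omega> \<mu> X (Suc k)"
  have a0: "0 \<le> ?a" and a1: "?a \<le> 1" using alpha_props(2,3)[OF PO Xm] by auto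
  have s: "\<delta> / (2 + \<delta>) \<le> 1" using dpos by simp
  have "?a = ?a powr 1" using a0 by (simp add: powr_one)
  also have "\<dots> \<le> ?a powr (\<delta> / (2 + \<delta>))" using powr_mono'[OF s a0 a1] .
  finally show "norm ?a \<le> ?a powr (\<delta> / (2 + \<delta>))" using a0 by simp
qed

lemma lr_meas:
  assumes td: "transition_density \<mu> p \<Theta>" and q0: "init_density \<mu> q0" and th: "\<theta> \<in> \<Theta>" and th0: "\<theta>0 \<in> \<Theta>"
  shows "log_ratio q0 p n \<theta> \<theta>0 \<in> borel_measurable (PiM {0..n} (\<lambda>_. \<mu>))"
proof -
  note dens_meas[OF td q0 th, of n, measurable] dens_meas[OF td q0 th0, of n, measurable]
  show ?thesis unfolding log_ratio_def[abs_def] by measurable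
qed

lemma g_meas:
  assumes td: "transition_density \<mu> p \<Theta>" and th: "\<theta> \<in> \<Theta>" and th0: "\<theta>0 \<in> \<Theta>"
    and A: "A \<in> measurable N \<mu>" and B: "B \<in> measurable N \<mu>"
  shows "(\<lambda>\<omega>. ln (p \<theta>0 (A \<omega>) (B \<omega>)) - ln (p \<theta> (A \<omega>) (B \<omega>))) \<in> borel_measurable N"
proof -
  have pm: "(\<lambda>z. p t (fst z) (snd z)) \<in> borel_measurable (\<mu> \<Otimes>\<^sub>M \<mu>)" if "t \<in> \<Theta>" for t
  proof -
    have "(\<lambda>(x, y). p t x y) \<in> borel_measurable (\<mu> \<Otimes>\<^sub>M \<mu>)"
      using td that unfolding transition_density_def by blast
    moreover have "(\<lambda>z. p t (fst z) (snd z)) = (\<lambda>(x, y). p t x y)" by auto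
    ultimately show ?thesis by simp
  qed
  note pm[OF th, measurable] pm[OF th0, measurable]
  have gm: "(\<lambda>z. ln (p \<theta>0 (fst z) (snd z)) - ln (p \<theta> (fst z) (snd z))) \<in> borel_measurable (\<mu> \<Otimes>\<^sub>M \<mu>)"
    by measurable
  have "(\<lambda>\<omega>. (A \<omega>, B \<omega>)) \<in> measurable N (\<mu> \<Otimes>\<^sub>M \<mu>)" using A B by (rule measurable_Pair)
  from measurable_comp[OF this gm] show ?thesis by (simp add: comp_def)
qed


lemma var_model:
  fixes n :: nat
  assumes td: "transition_density \<mu> p \<Theta>"
    and pos: "\<forall>\<theta>\<in>\<Theta>. \<forall>x\<in>space \<mu>. \<forall>y\<in>space \<mu>. p \<theta> x y > 0"
    and q0: "init_density \<mu> q0" and th: "\<theta> \<in> \<Theta>" and th0: "\<theta>0 \<in> \<Theta>"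
    and PO: "prob_space \<Omega>" and Xm: "\<forall>i. X i \<in> measurable \<Omega> \<mu>"
    and Xl: "distr \<Omega> (PiM {0..n} (\<lambda>_. \<mu>)) (\<lambda>\<omega>. \<lambda>i\<in>{0..n}. X i \<omega>) = markov_law \<mu> q0 p \<theta>0 n"
    and gb: "\<forall>x\<in>space \<mu>. \<forall>y\<in>space \<mu>. \<bar>ln (p \<theta>0 x y) - ln (p \<theta> x y)\<bar> \<le> b"
    and sm: "summable (\<lambda>k. alpha_mix \<Omega> \<mu> X (Suc k))"
  shows "Var_nn (markov_law \<mu> q0 p \<theta>0 n) (log_ratio q0 p n \<theta> \<theta>0)
     \<le> ennreal (real n * (8 * b\<^sup>2 * suminf (\<lambda>d. if d < 2 then 1 else alpha_mix \<Omega> \<mu> X (d - 1))))"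
proof -
  interpret prob_space \<Omega> by fact
  define L where "L = PiM {0..n} (\<lambda>_. \<mu>)"
  define Y where "Y = (\<lambda>\<omega>. \<lambda>i\<in>{0..n}. X i \<omega>)"
  define hl where "hl = log_ratio q0 p n \<theta> \<theta>0"
  define G where "G = (\<lambda>i \<omega>. ln (p \<theta>0 (X (i - 1) \<omega>) (X i \<omega>)) - ln (p \<theta> (X (i - 1) \<omega>) (X i \<omega>)))"
  define S where "S = (\<lambda>\<omega>. \<Sum>i=1..n. G i \<omega>)"
  have Ym[measurable]: "Y \<in> measurable \<Omega> L" unfolding Y_def L_def
    by (rule measurable_restrict) (use Xm in simp)
  have Xl': "distr \<Omega> L Y = markov_law \<mu> q0 p \<theta>0 n" using Xl unfolding Y_def L_def .
  have hm[measurable]: "hl \<in> borel_measurable L" unfolding hl_def L_def by (rule lr_meas[OF td q0 th th0])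
  have Gm[measurable]: "G i \<in> borel_measurable \<Omega>" for i
    unfolding G_def by (rule g_meas[OF td th th0 Xm[rule_format] Xm[rule_format]])
  have Sm[measurable]: "S \<in> borel_measurable \<Omega>" unfolding S_def by measurable
  have Gb: "\<bar>G i \<omega>\<bar> \<le> b" if "\<omega> \<in> space \<Omega>" for i \<omega>
  proof -
    have "X (i - 1) \<omega> \<in> space \<mu>" "X i \<omega> \<in> space \<mu>"
      using measurable_space[OF Xm[rule_format] that] by auto
    then show ?thesis unfolding G_def using gb by blast
  qed
  have Sb: "\<bar>S \<omega>\<bar> \<le> real n * b" if "\<omega> \<in> space \<Omega>" for \<omega>
  proof -
    have "\<bar>S \<omega>\<bar> \<le> (\<Sum>i=1..n. \<bar>G i \<omega>\<bar>)" unfolding S_def by (rule sum_abs)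
    also have "\<dots> \<le> (\<Sum>i=1..n. b)" by (rule sum_mono) (rule Gb[OF that])
    finally show ?thesis by simp
  qed
  have d0m: "(\<lambda>x. ennreal (markov_dens q0 p \<theta>0 n x)) \<in> borel_measurable L"
    using dens_meas[OF td q0 th0, of n] unfolding L_def by measurable
  have aeq: "AE x in markov_law \<mu> q0 p \<theta>0 n. 0 < q0 (x 0)"
  proof -
    have "AE x in L. 0 < ennreal (markov_dens q0 p \<theta>0 n x) \<longrightarrow> 0 < q0 (x 0)"
    proof (rule AE_I2, rule impI)
      fix x assume x: "x \<in> space L" and "0 < ennreal (markov_dens q0 p \<theta>0 n x)"
      then have "0 < markov_dens q0 p \<theta>0 n x" by simp
      then show "0 < q0 (x 0)" using dens_props(2)[OF td pos q0 th0] x unfolding L_def by blast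
    qed
    then show ?thesis unfolding markov_law_def L_def[symmetric] using AE_density[OF d0m] by simp
  qed
  have q0m: "q0 \<in> borel_measurable \<mu>" using q0 unfolding init_density_def by simp
  have Pset: "{x \<in> space L. 0 < q0 (x 0)} \<in> sets L"
  proof -
    have "(\<lambda>x. q0 (x 0)) \<in> borel_measurable L"
      using measurable_comp[OF measurable_component_singleton[of 0 "{0..n}" "\<lambda>_. \<mu>"] q0m]
      unfolding L_def by (simp add: comp_def)
    then show ?thesis by measurable
  qed
  have aeO: "AE \<omega> in \<Omega>. 0 < q0 (Y \<omega> 0)"
    using aeq unfolding Xl'[symmetric] using AE_distr_iff[OF Ym Pset] by simp
  have ae: "AE \<omega> in \<Omega>. hl (Y \<omega>) = S \<omega>"
    using aeO AE_space
  proof (eventually_elim)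
    case (elim \<omega>)
    have Yw: "Y \<omega> \<in> space L" using measurable_space[OF Ym elim(2)] .
    have "hl (Y \<omega>) = (\<Sum>i=1..n. ln (p \<theta>0 (Y \<omega> (i - 1)) (Y \<omega> i)) - ln (p \<theta> (Y \<omega> (i - 1)) (Y \<omega> i)))"
      unfolding hl_def by (rule lr_formula[OF td pos q0 th th0 Yw[unfolded L_def] elim(1)])
    also have "\<dots> = S \<omega>" unfolding S_def G_def
      by (rule sum.cong) (auto simp: Y_def)
    finally show ?case .
  qed
  define e where "e = (\<integral>\<omega>. S \<omega> \<partial>\<Omega>)"
  have he: "(\<integral>x. hl x \<partial>markov_law \<mu> q0 p \<theta>0 n) = e"
  proof -
    have "(\<integral>x. hl x \<partial>markov_law \<mu> q0 p \<theta>0 n) = (\<integral>\<omega>. hl (Y \<omega>) \<partial>\<Omega>)"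
      unfolding Xl'[symmetric] by (rule integral_distr[OF Ym hm])
    also have "\<dots> = e" unfolding e_def by (rule integral_cong_AE) (use ae in auto)
    finally show ?thesis .
  qed
  have "Var_nn (markov_law \<mu> q0 p \<theta>0 n) hl = (\<integral>\<^sup>+x. ennreal ((hl x - e)\<^sup>2) \<partial>distr \<Omega> L Y)"
    unfolding Var_nn_def he Xl' ..
  also have "\<dots> = (\<integral>\<^sup>+\<omega>. ennreal ((hl (Y \<omega>) - e)\<^sup>2) \<partial>\<Omega>)"
    by (rule nn_integral_distr[OF Ym]) measurable
  also have "\<dots> = (\<integral>\<^sup>+\<omega>. ennreal ((S \<omega> - e)\<^sup>2) \<partial>\<Omega>)"
    by (rule nn_integral_cong_AE) (use ae in auto)
  also have "\<dots> = ennreal (\<integral>\<omega>. (S \<omega> - e)\<^sup>2 \<partial>\<Omega>)"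
  proof (rule nn_integral_eq_integral)
    show "integrable \<Omega> (\<lambda>\<omega>. (S \<omega> - e)\<^sup>2)"
    proof (rule integrable_const_bound[where B="(real n * b + \<bar>e\<bar>)\<^sup>2"])
      show "AE x in \<Omega>. norm ((S x - e)\<^sup>2) \<le> (real n * b + \<bar>e\<bar>)\<^sup>2"
      proof (rule AE_I2)
        fix x assume x: "x \<in> space \<Omega>"
        have "\<bar>S x - e\<bar> \<le> real n * b + \<bar>e\<bar>" using Sb[OF x] by linarith
        then have "\<bar>S x - e\<bar>\<^sup>2 \<le> (real n * b + \<bar>e\<bar>)\<^sup>2" by (rule power_mono) simp
        then show "norm ((S x - e)\<^sup>2) \<le> (real n * b + \<bar>e\<bar>)\<^sup>2" by simp
      qed
    qed measurable
  qed simp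
  also have "\<dots> \<le> ennreal (real n * (8 * b\<^sup>2 * suminf (\<lambda>d. if d < 2 then 1 else alpha_mix \<Omega> \<mu> X (d - 1))))"
  proof (rule ennreal_leI)
    have cov: "\<bar>(\<integral>\<omega>. G i \<omega> * G j \<omega> \<partial>\<Omega>) - (\<integral>\<omega>. G i \<omega> \<partial>\<Omega>) * (\<integral>\<omega>. G j \<omega> \<partial>\<Omega>)\<bar>
        \<le> 4 * b\<^sup>2 * alpha_mix \<Omega> \<mu> X (j - i - 1)" if ij: "i + 2 \<le> j" for i j
    proof -
      define k where "k = j - i - 1"
      define Fa where "Fa = genM \<Omega> \<mu> X {0..i}"
      define Fb where "Fb = genM \<Omega> \<mu> X {i + k..}"
      have subA: "subalgebra \<Omega> Fa" unfolding Fa_def by (rule genM_props(4)[OF Xm])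
      have subB: "subalgebra \<Omega> Fb" unfolding Fb_def by (rule genM_props(4)[OF Xm])
      have Um: "G i \<in> borel_measurable Fa" unfolding G_def Fa_def
        by (rule g_meas[OF td th th0 genM_meas[OF Xm] genM_meas[OF Xm]]) auto
      have Vm: "G j \<in> borel_measurable Fb" unfolding G_def Fb_def
        by (rule g_meas[OF td th th0 genM_meas[OF Xm] genM_meas[OF Xm]]) (use ij in \<open>auto simp: k_def\<close>)
      have mixab: "\<forall>A\<in>sets Fa. \<forall>B\<in>sets Fb. \<bar>measure \<Omega> (A \<inter> B) - measure \<Omega> A * measure \<Omega> B\<bar> \<le> alpha_mix \<Omega> \<mu> X k"
        unfolding Fa_def Fb_def genM_props(1)[OF Xm] using alpha_props(1)[OF PO Xm] by blast
      have "\<bar>(\<integral>\<omega>. G i \<omega> * G j \<omega> \<partial>\<Omega>) - (\<integral>\<omega>. G i \<omega> \<partial>\<Omega>) * (\<integral>\<omega>. G j \<omega> \<partial>\<Omega>)\<bar>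
         \<le> 4 * b * b * alpha_mix \<Omega> \<mu> X k"
        by (rule cov_mix[OF PO subA subB Um _ Vm _ mixab]) (use Gb in auto)
      then show ?thesis unfolding k_def by (simp add: power2_eq_square)
    qed
    have "(\<integral>\<omega>. (S \<omega> - e)\<^sup>2 \<partial>\<Omega>)
       \<le> real n * (8 * b\<^sup>2 * suminf (\<lambda>d. if d < 2 then 1 else alpha_mix \<Omega> \<mu> X (d - 1)))"
      unfolding e_def S_def
      by (rule var_sum_bound[where \<alpha>="alpha_mix \<Omega> \<mu> X" and G=G and M=\<Omega> and b=b and n=n, OF PO Gm Gb cov]) (use alpha_props(2)[OF PO Xm] sm in auto)
    then show "(\<integral>\<omega>. (S \<omega> - e)\<^sup>2 \<partial>\<Omega>)
       \<le> real n * (8 * b\<^sup>2 * suminf (\<lambda>d. if d < 2 then 1 else alpha_mix \<Omega> \<mu> X (d - 1)))" .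
  qed
  finally show ?thesis unfolding hl_def .
qed



lemma sq_sum_le:
  fixes a :: "nat \<Rightarrow> real"
  assumes "finite A"
  shows "(\<Sum>k\<in>A. a k)\<^sup>2 \<le> real (card A) * (\<Sum>k\<in>A. (a k)\<^sup>2)"
proof -
  have "(\<Sum>k\<in>A. a k)\<^sup>2 = (\<Sum>i\<in>A. \<Sum>j\<in>A. a i * a j)"
    by (simp add: power2_eq_square sum_product)
  also have "\<dots> \<le> (\<Sum>i\<in>A. \<Sum>j\<in>A. ((a i)\<^sup>2 + (a j)\<^sup>2) / 2)"
  proof (intro sum_mono)
    fix i j
    have "2 * (a i * a j) \<le> (a i)\<^sup>2 + (a j)\<^sup>2" using sum_squares_bound[of "a i" "a j"] by simp
    then show "a i * a j \<le> ((a i)\<^sup>2 + (a j)\<^sup>2) / 2" by simp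
  qed
  also have "\<dots> = (\<Sum>i\<in>A. \<Sum>j\<in>A. (a i)\<^sup>2 / 2) + (\<Sum>i\<in>A. \<Sum>j\<in>A. (a j)\<^sup>2 / 2)"
    by (simp only: add_divide_distrib sum.distrib)
  also have "(\<Sum>i\<in>A. \<Sum>j\<in>A. (a i)\<^sup>2 / 2) = (\<Sum>i\<in>A. real (card A) * ((a i)\<^sup>2 / 2))"
    by simp
  also have "\<dots> = real (card A) * (\<Sum>k\<in>A. (a k)\<^sup>2) / 2"
    by (simp add: sum_distrib_left[symmetric] sum_divide_distrib[symmetric])
  also have "(\<Sum>i\<in>A. \<Sum>j\<in>A. (a j)\<^sup>2 / 2) = (\<Sum>i\<in>A. (\<Sum>k\<in>A. (a k)\<^sup>2) / 2)"
    by (simp add: sum_divide_distrib[symmetric])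
  also have "\<dots> = real (card A) * (\<Sum>k\<in>A. (a k)\<^sup>2) / 2"
    by simp
  also have "real (card A) * (\<Sum>k\<in>A. (a k)\<^sup>2) / 2 + real (card A) * (\<Sum>k\<in>A. (a k)\<^sup>2) / 2
      = real (card A) * (\<Sum>k\<in>A. (a k)\<^sup>2)" by simp
  finally show ?thesis .
qed

lemma sq_le_pow:
  fixes x \<delta> :: real
  assumes "0 < \<delta>"
  shows "x\<^sup>2 \<le> \<bar>x\<bar> + \<bar>x\<bar> powr (2 + \<delta>)"
proof (cases "\<bar>x\<bar> \<le> 1")
  case True
  have "x\<^sup>2 = \<bar>x\<bar> * \<bar>x\<bar>" by (simp add: power2_eq_square)
  also have "\<dots> \<le> \<bar>x\<bar> * 1" using True by (intro mult_left_mono) auto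
  finally have "x\<^sup>2 \<le> \<bar>x\<bar>" by simp
  then show ?thesis using powr_ge_zero[of "\<bar>x\<bar>" "2 + \<delta>"] by linarith
next
  case False
  then have x1: "1 \<le> \<bar>x\<bar>" by simp
  have "x\<^sup>2 = \<bar>x\<bar> powr 2" using x1 by (simp add: powr_numeral)
  also have "\<dots> \<le> \<bar>x\<bar> powr (2 + \<delta>)" using assms x1 by (intro powr_mono) auto
  finally show ?thesis by simp
qed

lemma nn_sum_bound:
  fixes g :: "nat \<Rightarrow> 'a \<Rightarrow> real"
  assumes fin: "finite A" and gm: "\<And>k. k \<in> A \<Longrightarrow> g k \<in> borel_measurable N"
    and g0: "\<And>k x. 0 \<le> g k x"
    and gi: "\<And>k. k \<in> A \<Longrightarrow> (\<integral>\<^sup>+x. ennreal (g k x) \<partial>N) \<le> ennreal c"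
    and a0: "0 \<le> a" and c0: "0 \<le> c"
  shows "(\<integral>\<^sup>+x. ennreal (a * (\<Sum>k\<in>A. g k x)) \<partial>N) \<le> ennreal (a * (real (card A) * c))"
proof -
  have "(\<integral>\<^sup>+x. ennreal (a * (\<Sum>k\<in>A. g k x)) \<partial>N) = (\<integral>\<^sup>+x. ennreal a * (\<Sum>k\<in>A. ennreal (g k x)) \<partial>N)"
    using g0 a0 by (simp add: ennreal_mult' sum_nonneg)
  also have "\<dots> = ennreal a * (\<integral>\<^sup>+x. (\<Sum>k\<in>A. ennreal (g k x)) \<partial>N)"
    by (rule nn_integral_cmult) (use gm in measurable)
  also have "(\<integral>\<^sup>+x. (\<Sum>k\<in>A. ennreal (g k x)) \<partial>N) = (\<Sum>k\<in>A. (\<integral>\<^sup>+x. ennreal (g k x) \<partial>N))"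
    by (rule nn_integral_sum) (use gm in measurable)
  also have "\<dots> \<le> (\<Sum>k\<in>A. ennreal c)" by (rule sum_mono) (rule gi)
  also have "(\<Sum>k\<in>A. ennreal c) = ennreal (real (card A) * c)" using c0 by (simp add: ennreal_mult'' ennreal_of_nat_eq_real_of_nat)
  finally have "(\<integral>\<^sup>+x. ennreal (a * (\<Sum>k\<in>A. g k x)) \<partial>N) \<le> ennreal a * ennreal (real (card A) * c)"
    by (simp add: mult_left_mono)
  also have "\<dots> = ennreal (a * (real (card A) * c))" using a0 by (rule ennreal_mult'[symmetric])
  finally show ?thesis .
qed



theorem mainTheorem9:
  fixes \<mu> :: "'a measure"
    and \<Theta> :: "(real^'d) set"
    and p :: "real^'d \<Rightarrow> 'a \<Rightarrow> 'a \<Rightarrow> real"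
    and q0 :: "'a \<Rightarrow> real"
    and \<theta>0 :: "real^'d"
    and \<Omega> :: "'w measure"
    and X :: "nat \<Rightarrow> 'w \<Rightarrow> 'a"
    and \<pi> :: "(real^'d) measure"
    and \<F> :: "(real^'d) measure set"
    and \<rho> :: "nat \<Rightarrow> (real^'d) measure"
    and \<delta> B C :: real
    and m :: nat
    and M :: "nat \<Rightarrow> 'a \<Rightarrow> 'a \<Rightarrow> real"
    and f :: "nat \<Rightarrow> real^'d \<Rightarrow> real^'d \<Rightarrow> real"
  assumes sf: "sigma_finite_measure \<mu>"
    and td: "transition_density \<mu> p \<Theta>"
    and pos: "\<forall>\<theta>\<in>\<Theta>. \<forall>x\<in>space \<mu>. \<forall>y\<in>space \<mu>. p \<theta> x y > 0"
    and q0: "init_density \<mu> q0"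
    and th0: "\<theta>0 \<in> \<Theta>"
    (* the chain generated under theta0 *)
    and PO: "prob_space \<Omega>"
    and Xmeas: "\<forall>i. X i \<in> measurable \<Omega> \<mu>"
    and Xlaw: "\<forall>n. distr \<Omega> (PiM {0..n} (\<lambda>_. \<mu>)) (\<lambda>\<omega>. \<lambda>i\<in>{0..n}. X i \<omega>)
                     = markov_law \<mu> q0 p \<theta>0 n"
    and dpos: "\<delta> > 0"
    and mix: "summable (\<lambda>k. alpha_mix \<Omega> \<mu> X (Suc k) powr (\<delta> / (2 + \<delta>)))"
    (* parameter space measures *)
    and pi: "prob_space \<pi>" "sets \<pi> = sets (restrict_space borel \<Theta>)"
    and rhoF: "\<forall>n. \<rho> n \<in> \<F>"
    and rho: "\<forall>n. prob_space (\<rho> n) \<and> sets (\<rho> n) = sets (restrict_space borel \<Theta>)"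
    and fmeas: "\<forall>k\<in>{1..m}. (\<lambda>\<theta>. f k \<theta> \<theta>0) \<in> borel_measurable (restrict_space borel \<Theta>)"
    (* Lipschitz-type condition *)
    and Mbd: "\<forall>k\<in>{1..m}. \<forall>x\<in>space \<mu>. \<forall>y\<in>space \<mu>. \<bar>M k y x\<bar> \<le> B"
    and lip: "\<forall>\<theta>1\<in>\<Theta>. \<forall>\<theta>2\<in>\<Theta>. \<forall>x\<in>space \<mu>. \<forall>y\<in>space \<mu>.
                \<bar>ln (p \<theta>1 x y) - ln (p \<theta>2 x y)\<bar> \<le> (\<Sum>k=1..m. M k y x * \<bar>f k \<theta>2 \<theta>1\<bar>)"
    and Cpos: "C > 0"
    and mom1: "\<forall>k\<in>{1..m}. \<forall>n\<ge>1.
                 (\<integral>\<^sup>+\<theta>. ennreal (\<bar>f k \<theta> \<theta>0\<bar> powr (2 + \<delta>)) \<partial>\<rho> n) \<le> ennreal (C / real n)"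
    and mom2: "\<forall>k\<in>{1..m}. \<forall>n\<ge>1.
                 (\<integral>\<^sup>+\<theta>. ennreal \<bar>f k \<theta> \<theta>0\<bar> \<partial>\<rho> n) \<le> ennreal (C / sqrt (real n))"
    and KLrho: "\<forall>n\<ge>1. KL_div (\<rho> n) \<pi> \<le> ennreal (C * sqrt (real n))"
  shows "\<exists>\<epsilon> :: nat \<Rightarrow> real.
           (\<exists>K. \<forall>n\<ge>1. \<epsilon> n \<le> K * max (1 / sqrt (real n)) (real n powr (\<delta> / 2) / real n))
         \<and> (\<forall>n\<ge>1.
              (\<integral>\<^sup>+\<theta>. KL_div (markov_law \<mu> q0 p \<theta>0 n) (markov_law \<mu> q0 p \<theta> n) \<partial>\<rho> n)
                 \<le> ennreal (real n * \<epsilon> n)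
            \<and> (\<integral>\<^sup>+\<theta>. Var_nn (markov_law \<mu> q0 p \<theta>0 n) (log_ratio q0 p n \<theta> \<theta>0) \<partial>\<rho> n)
                 \<le> ennreal (real n * \<epsilon> n)
            \<and> KL_div (\<rho> n) \<pi> \<le> ennreal (real n * \<epsilon> n))"
  proof -
  define Bp where "Bp = max B 0"
  have Bp0: "0 \<le> Bp" unfolding Bp_def by simp
  have Mbd': "M k y x \<le> Bp" if "k \<in> {1..m}" "x \<in> space \<mu>" "y \<in> space \<mu>" for k x y
    using Mbd that unfolding Bp_def by force
  define F where "F = (\<lambda>\<theta>. \<Sum>k=1..m. \<bar>f k \<theta> \<theta>0\<bar>)"
  have F0: "0 \<le> F \<theta>" for \<theta> unfolding F_def by (simp add: sum_nonneg)
  have gb: "\<forall>x\<in>space \<mu>. \<forall>y\<in>space \<mu>. \<bar>ln (p \<theta>0 x y) - ln (p \<theta> x y)\<bar> \<le> Bp * F \<theta>"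
    if th: "\<theta> \<in> \<Theta>" for \<theta>
  proof (intro ballI)
    fix x y assume x: "x \<in> space \<mu>" and y: "y \<in> space \<mu>"
    have "\<bar>ln (p \<theta>0 x y) - ln (p \<theta> x y)\<bar> \<le> (\<Sum>k=1..m. M k y x * \<bar>f k \<theta> \<theta>0\<bar>)"
      using lip th0 th x y by blast
    also have "\<dots> \<le> (\<Sum>k=1..m. Bp * \<bar>f k \<theta> \<theta>0\<bar>)"
    proof (rule sum_mono)
      fix k assume k: "k \<in> {1..m}"
      show "M k y x * \<bar>f k \<theta> \<theta>0\<bar> \<le> Bp * \<bar>f k \<theta> \<theta>0\<bar>"
        using Mbd'[OF k x y] by (intro mult_right_mono) auto
    qed
    also have "\<dots> = Bp * F \<theta>" unfolding F_def by (simp add: sum_distrib_left)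
    finally show "\<bar>ln (p \<theta>0 x y) - ln (p \<theta> x y)\<bar> \<le> Bp * F \<theta>" .
  qed
  have lrb: "\<forall>x\<in>space (PiM {0..n} (\<lambda>_. \<mu>)). \<bar>log_ratio q0 p n \<theta> \<theta>0 x\<bar> \<le> real n * (Bp * F \<theta>)"
    if th: "\<theta> \<in> \<Theta>" for \<theta> n
  proof
    fix x assume x: "x \<in> space (PiM {0..n} (\<lambda>_. \<mu>))"
    show "\<bar>log_ratio q0 p n \<theta> \<theta>0 x\<bar> \<le> real n * (Bp * F \<theta>)"
    proof (cases "0 < q0 (x 0)")
      case True
      have "\<bar>log_ratio q0 p n \<theta> \<theta>0 x\<bar>
          = \<bar>\<Sum>i=1..n. ln (p \<theta>0 (x (i - 1)) (x i)) - ln (p \<theta> (x (i - 1)) (x i))\<bar>"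
        using lr_formula[OF td pos q0 th th0 x True] by simp
      also have "\<dots> \<le> (\<Sum>i=1..n. \<bar>ln (p \<theta>0 (x (i - 1)) (x i)) - ln (p \<theta> (x (i - 1)) (x i))\<bar>)"
        by (rule sum_abs)
      also have "\<dots> \<le> (\<Sum>i=1..n. Bp * F \<theta>)"
      proof (rule sum_mono)
        fix i assume i: "i \<in> {1..n}"
        have "x (i - 1) \<in> space \<mu>" "x i \<in> space \<mu>"
          using space_PiM_mem[OF x] i by auto
        then show "\<bar>ln (p \<theta>0 (x (i - 1)) (x i)) - ln (p \<theta> (x (i - 1)) (x i))\<bar> \<le> Bp * F \<theta>"
          using gb[OF th] by blast
      qed
      also have "\<dots> = real n * (Bp * F \<theta>)" by simp
      finally show ?thesis .
    next
      case False
      have "0 \<le> q0 (x 0)" using q0 space_PiM_mem[OF x, of 0] unfolding init_density_def by auto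
      then have "q0 (x 0) = 0" using False by simp
      then have "log_ratio q0 p n \<theta> \<theta>0 x = 0" unfolding log_ratio_def markov_dens_def by simp
      then show ?thesis using Bp0 F0[of \<theta>] by simp
    qed
  qed
  have P0p: "prob_space (markov_law \<mu> q0 p \<theta>0 n)" for n
  proof -
    interpret prob_space \<Omega> by (rule PO)
    have "(\<lambda>\<omega>. \<lambda>i\<in>{0..n}. X i \<omega>) \<in> measurable \<Omega> (PiM {0..n} (\<lambda>_. \<mu>))"
      by (rule measurable_restrict) (use Xmeas in simp)
    then have "prob_space (distr \<Omega> (PiM {0..n} (\<lambda>_. \<mu>)) (\<lambda>\<omega>. \<lambda>i\<in>{0..n}. X i \<omega>))"
      by (rule prob_space_distr)
    then show ?thesis using Xlaw by simp
  qed
  have KLb: "KL_div (markov_law \<mu> q0 p \<theta>0 n) (markov_law \<mu> q0 p \<theta> n) \<le> ennreal (real n * (Bp * F \<theta>))"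
    if th: "\<theta> \<in> \<Theta>" for \<theta> n
    by (rule kl_bound[OF td pos q0 th th0 P0p lrb[OF th]])
  have sma: "summable (\<lambda>k. alpha_mix \<Omega> \<mu> X (Suc k))" by (rule alpha_summable[OF PO Xmeas dpos mix])
  define \<Gamma> where "\<Gamma> = suminf (\<lambda>d. if d < 2 then 1 else alpha_mix \<Omega> \<mu> X (d - 1))"
  have \<Gamma>0: "0 \<le> \<Gamma>"
  proof -
    let ?g = "\<lambda>d::nat. if d < 2 then 1 else alpha_mix \<Omega> \<mu> X (d - 1)"
    have "summable (\<lambda>d. ?g (d + 2))" using sma by simp
    then have "summable ?g" by (rule summable_iff_shift[THEN iffD1])
    moreover have "\<forall>d. 0 \<le> ?g d" using alpha_props(2)[OF PO Xmeas] by simp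
    ultimately show ?thesis unfolding \<Gamma>_def by (intro suminf_nonneg) auto
  qed
  have Vb: "Var_nn (markov_law \<mu> q0 p \<theta>0 n) (log_ratio q0 p n \<theta> \<theta>0) \<le> ennreal (real n * (8 * (Bp * F \<theta>)\<^sup>2 * \<Gamma>))"
    if th: "\<theta> \<in> \<Theta>" for \<theta> n
    unfolding \<Gamma>_def by (rule var_model[OF td pos q0 th th0 PO Xmeas Xlaw[rule_format] gb[OF th] sma])
  have spr: "space (\<rho> n) = \<Theta>" for n
  proof -
    have "sets (\<rho> n) = sets (restrict_space borel \<Theta>)" using rho by blast
    then have "space (\<rho> n) = space (restrict_space borel \<Theta>)" by (rule sets_eq_imp_space_eq)
    then show ?thesis by (simp add: space_restrict_space)
  qed
  have fm: "(\<lambda>\<theta>. f k \<theta> \<theta>0) \<in> borel_measurable (\<rho> n)" if k: "k \<in> {1..m}" for k n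
  proof -
    have e: "sets (\<rho> n) = sets (restrict_space borel \<Theta>)" using rho by blast
    show ?thesis unfolding measurable_cong_sets[OF e refl] using fmeas k by blast
  qed
  define K where "K = Bp * real m * C + 16 * Bp\<^sup>2 * \<Gamma> * (real m)\<^sup>2 * C + C"
  have Kp: "0 \<le> Bp * real m * C" "0 \<le> 16 * Bp\<^sup>2 * \<Gamma> * (real m)\<^sup>2 * C"
    using Bp0 \<Gamma>0 Cpos by auto
  have K1: "Bp * real m * C \<le> K" and K2: "16 * Bp\<^sup>2 * \<Gamma> * (real m)\<^sup>2 * C \<le> K" and K3: "C \<le> K"
    and K0: "0 \<le> K"
    using Kp Cpos unfolding K_def by linarith+
  define \<epsilon> where "\<epsilon> = (\<lambda>n::nat. K / sqrt (real n))"
  have scale: "real n * (Z / sqrt (real n)) \<le> real n * \<epsilon> n" if "Z \<le> K" for n Z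
    unfolding \<epsilon>_def using that by (intro mult_left_mono divide_right_mono) auto
  have fam: "(\<lambda>\<theta>. \<bar>f k \<theta> \<theta>0\<bar>) \<in> borel_measurable (\<rho> n)" if "k \<in> {1..m}" for k n
    using fm[OF that, of n] by measurable
  have fpm: "(\<lambda>\<theta>. \<bar>f k \<theta> \<theta>0\<bar> + \<bar>f k \<theta> \<theta>0\<bar> powr (2 + \<delta>)) \<in> borel_measurable (\<rho> n)"
    if "k \<in> {1..m}" for k n
    using fm[OF that, of n] by measurable
  show ?thesis
  proof (intro exI[of _ \<epsilon>] conjI allI impI)
    show "\<exists>K. \<forall>n\<ge>1. \<epsilon> n \<le> K * max (1 / sqrt (real n)) (real n powr (\<delta> / 2) / real n)"
    proof (intro exI[of _ K] allI impI)
      fix n :: nat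
      have "\<epsilon> n = K * (1 / sqrt (real n))" unfolding \<epsilon>_def by simp
      also have "\<dots> \<le> K * max (1 / sqrt (real n)) (real n powr (\<delta> / 2) / real n)"
        using K0 by (intro mult_left_mono) auto
      finally show "\<epsilon> n \<le> K * max (1 / sqrt (real n)) (real n powr (\<delta> / 2) / real n)" .
    qed
  next
    fix n :: nat assume n: "1 \<le> n"
    have s0: "0 < sqrt (real n)" using n by simp
    have ss: "sqrt (real n) * sqrt (real n) = real n" by simp
    have sn: "sqrt (real n) \<le> real n"
    proof -
      have "1 \<le> sqrt (real n)" using n by simp
      then have "sqrt (real n) * 1 \<le> sqrt (real n) * sqrt (real n)" using s0 by (intro mult_left_mono) auto
      then show ?thesis using ss by simp
    qed
    show "(\<integral>\<^sup>+\<theta>. KL_div (markov_law \<mu> q0 p \<theta>0 n) (markov_law \<mu> q0 p \<theta> n) \<partial>\<rho> n) \<le> ennreal (real n * \<epsilon> n)"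
    proof -
      have "(\<integral>\<^sup>+\<theta>. KL_div (markov_law \<mu> q0 p \<theta>0 n) (markov_law \<mu> q0 p \<theta> n) \<partial>\<rho> n)
          \<le> (\<integral>\<^sup>+\<theta>. ennreal (real n * Bp * (\<Sum>k\<in>{1..m}. \<bar>f k \<theta> \<theta>0\<bar>)) \<partial>\<rho> n)"
      proof (rule nn_integral_mono)
        fix \<theta> assume "\<theta> \<in> space (\<rho> n)"
        then have th: "\<theta> \<in> \<Theta>" using spr by simp
        show "KL_div (markov_law \<mu> q0 p \<theta>0 n) (markov_law \<mu> q0 p \<theta> n)
            \<le> ennreal (real n * Bp * (\<Sum>k\<in>{1..m}. \<bar>f k \<theta> \<theta>0\<bar>))"
          using KLb[OF th, of n] unfolding F_def by (simp add: mult.assoc)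
      qed
      also have "\<dots> \<le> ennreal (real n * Bp * (real (card {1..m}) * (C / sqrt (real n))))"
        proof (rule nn_sum_bound)
        fix k assume k: "k \<in> {1..m}"
        show "(\<lambda>\<theta>. \<bar>f k \<theta> \<theta>0\<bar>) \<in> borel_measurable (\<rho> n)" by (rule fam[OF k])
        show "(\<integral>\<^sup>+\<theta>. ennreal \<bar>f k \<theta> \<theta>0\<bar> \<partial>\<rho> n) \<le> ennreal (C / sqrt (real n))"
          using mom2 k n by blast
      next
        show "0 \<le> real n * Bp" using Bp0 by simp
        show "0 \<le> C / sqrt (real n)" using Cpos by simp
      qed simp_all
      also have "\<dots> \<le> ennreal (real n * \<epsilon> n)"
      proof (rule ennreal_leI)
        have "real n * Bp * (real (card {1..m}) * (C / sqrt (real n))) = real n * ((Bp * real m * C) / sqrt (real n))"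
          by simp
        also have "\<dots> \<le> real n * \<epsilon> n" by (rule scale[OF K1])
        finally show "real n * Bp * (real (card {1..m}) * (C / sqrt (real n))) \<le> real n * \<epsilon> n" .
      qed
      finally show ?thesis .
    qed
    define co where "co = real n * 8 * Bp\<^sup>2 * \<Gamma> * real m"
    have co0: "0 \<le> co" unfolding co_def using Bp0 \<Gamma>0 by simp
    show "(\<integral>\<^sup>+\<theta>. Var_nn (markov_law \<mu> q0 p \<theta>0 n) (log_ratio q0 p n \<theta> \<theta>0) \<partial>\<rho> n) \<le> ennreal (real n * \<epsilon> n)"
    proof -
      have "(\<integral>\<^sup>+\<theta>. Var_nn (markov_law \<mu> q0 p \<theta>0 n) (log_ratio q0 p n \<theta> \<theta>0) \<partial>\<rho> n)
          \<le> (\<integral>\<^sup>+\<theta>. ennreal (co * (\<Sum>k\<in>{1..m}. \<bar>f k \<theta> \<theta>0\<bar> + \<bar>f k \<theta> \<theta>0\<bar> powr (2 + \<delta>))) \<partial>\<rho> n)"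
      proof (rule nn_integral_mono)
        fix \<theta> assume "\<theta> \<in> space (\<rho> n)"
        then have th: "\<theta> \<in> \<Theta>" using spr by simp
        have F2: "(F \<theta>)\<^sup>2 \<le> real m * (\<Sum>k\<in>{1..m}. \<bar>f k \<theta> \<theta>0\<bar> + \<bar>f k \<theta> \<theta>0\<bar> powr (2 + \<delta>))"
        proof -
          have "(F \<theta>)\<^sup>2 \<le> real (card {1..m}) * (\<Sum>k\<in>{1..m}. (\<bar>f k \<theta> \<theta>0\<bar>)\<^sup>2)"
            unfolding F_def by (rule sq_sum_le) simp
          also have "\<dots> \<le> real (card {1..m}) * (\<Sum>k\<in>{1..m}. \<bar>f k \<theta> \<theta>0\<bar> + \<bar>f k \<theta> \<theta>0\<bar> powr (2 + \<delta>))"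
          proof (intro mult_left_mono sum_mono)
            fix k assume "k \<in> {1..m}"
            have "(f k \<theta> \<theta>0)\<^sup>2 \<le> \<bar>f k \<theta> \<theta>0\<bar> + \<bar>f k \<theta> \<theta>0\<bar> powr (2 + \<delta>)" by (rule sq_le_pow[OF dpos])
            then show "(\<bar>f k \<theta> \<theta>0\<bar>)\<^sup>2 \<le> \<bar>f k \<theta> \<theta>0\<bar> + \<bar>f k \<theta> \<theta>0\<bar> powr (2 + \<delta>)" by simp
          qed simp
          finally show ?thesis by simp
        qed
        have "real n * (8 * (Bp * F \<theta>)\<^sup>2 * \<Gamma>) = (real n * 8 * Bp\<^sup>2 * \<Gamma>) * (F \<theta>)\<^sup>2"
          by (simp add: power_mult_distrib mult_ac)
        also have "\<dots> \<le> (real n * 8 * Bp\<^sup>2 * \<Gamma>) * (real m * (\<Sum>k\<in>{1..m}. \<bar>f k \<theta> \<theta>0\<bar> + \<bar>f k \<theta> \<theta>0\<bar> powr (2 + \<delta>)))"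
          using F2 Bp0 \<Gamma>0 by (intro mult_left_mono) auto
        also have "\<dots> = co * (\<Sum>k\<in>{1..m}. \<bar>f k \<theta> \<theta>0\<bar> + \<bar>f k \<theta> \<theta>0\<bar> powr (2 + \<delta>))"
          unfolding co_def by simp
        finally have "real n * (8 * (Bp * F \<theta>)\<^sup>2 * \<Gamma>) \<le> co * (\<Sum>k\<in>{1..m}. \<bar>f k \<theta> \<theta>0\<bar> + \<bar>f k \<theta> \<theta>0\<bar> powr (2 + \<delta>))" .
        then show "Var_nn (markov_law \<mu> q0 p \<theta>0 n) (log_ratio q0 p n \<theta> \<theta>0)
            \<le> ennreal (co * (\<Sum>k\<in>{1..m}. \<bar>f k \<theta> \<theta>0\<bar> + \<bar>f k \<theta> \<theta>0\<bar> powr (2 + \<delta>)))"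
          by (rule order_trans[OF Vb[OF th, of n] ennreal_leI])
      qed
      also have "\<dots> \<le> ennreal (co * (real (card {1..m}) * (2 * C / sqrt (real n))))"
      proof (rule nn_sum_bound)
        fix k assume k: "k \<in> {1..m}"
        show "(\<lambda>\<theta>. \<bar>f k \<theta> \<theta>0\<bar> + \<bar>f k \<theta> \<theta>0\<bar> powr (2 + \<delta>)) \<in> borel_measurable (\<rho> n)" by (rule fpm[OF k])
        have "(\<integral>\<^sup>+\<theta>. ennreal (\<bar>f k \<theta> \<theta>0\<bar> + \<bar>f k \<theta> \<theta>0\<bar> powr (2 + \<delta>)) \<partial>\<rho> n)
            = (\<integral>\<^sup>+\<theta>. ennreal \<bar>f k \<theta> \<theta>0\<bar> + ennreal (\<bar>f k \<theta> \<theta>0\<bar> powr (2 + \<delta>)) \<partial>\<rho> n)"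
          by (simp add: ennreal_plus)
        also have "\<dots> = (\<integral>\<^sup>+\<theta>. ennreal \<bar>f k \<theta> \<theta>0\<bar> \<partial>\<rho> n) + (\<integral>\<^sup>+\<theta>. ennreal (\<bar>f k \<theta> \<theta>0\<bar> powr (2 + \<delta>)) \<partial>\<rho> n)"
        proof (rule nn_integral_add)
          note fm[OF k, of n, measurable]
          show "(\<lambda>\<theta>. ennreal \<bar>f k \<theta> \<theta>0\<bar>) \<in> borel_measurable (\<rho> n)" by measurable
          show "(\<lambda>\<theta>. ennreal (\<bar>f k \<theta> \<theta>0\<bar> powr (2 + \<delta>))) \<in> borel_measurable (\<rho> n)" by measurable
        qed
        also have "\<dots> \<le> ennreal (C / sqrt (real n)) + ennreal (C / real n)"
          using mom1 mom2 k n by (intro add_mono) blast+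
        also have "\<dots> = ennreal (C / sqrt (real n) + C / real n)"
          using Cpos by (simp add: ennreal_plus)
        also have "\<dots> \<le> ennreal (2 * C / sqrt (real n))"
        proof (rule ennreal_leI)
          have "C / real n \<le> C / sqrt (real n)" using Cpos s0 sn by (intro divide_left_mono) auto
          then show "C / sqrt (real n) + C / real n \<le> 2 * C / sqrt (real n)" by simp
        qed
        finally show "(\<integral>\<^sup>+\<theta>. ennreal (\<bar>f k \<theta> \<theta>0\<bar> + \<bar>f k \<theta> \<theta>0\<bar> powr (2 + \<delta>)) \<partial>\<rho> n) \<le> ennreal (2 * C / sqrt (real n))" .
      next
        show "0 \<le> co" by (rule co0)
        show "0 \<le> 2 * C / sqrt (real n)" using Cpos by simp
      qed simp_all
      also have "\<dots> \<le> ennreal (real n * \<epsilon> n)"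
      proof (rule ennreal_leI)
        have "co * (real (card {1..m}) * (2 * C / sqrt (real n))) = real n * ((16 * Bp\<^sup>2 * \<Gamma> * (real m)\<^sup>2 * C) / sqrt (real n))"
          unfolding co_def by (simp add: power2_eq_square mult_ac)
        also have "\<dots> \<le> real n * \<epsilon> n" by (rule scale[OF K2])
        finally show "co * (real (card {1..m}) * (2 * C / sqrt (real n))) \<le> real n * \<epsilon> n" .
      qed
      finally show ?thesis .
    qed
    show "KL_div (\<rho> n) \<pi> \<le> ennreal (real n * \<epsilon> n)"
    proof -
      have "KL_div (\<rho> n) \<pi> \<le> ennreal (C * sqrt (real n))" using KLrho n by blast
      also have "\<dots> \<le> ennreal (real n * \<epsilon> n)"
      proof (rule ennreal_leI)
        have "C * sqrt (real n) = real n * (C / sqrt (real n))"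
          using s0 ss by (simp add: field_simps)
        also have "\<dots> \<le> real n * \<epsilon> n" by (rule scale[OF K3])
        finally show "C * sqrt (real n) \<le> real n * \<epsilon> n" .
      qed
      finally show ?thesis .
    qed
  qed
qed

end
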